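(* Let $X,Y$ be realcompact completely regular spaces, $E,F$ normed spaces with $E$ finite-dimensional, and let $T:C(X,E)\to C(Y,F)$ be a linear biseparating map. If $C(X,E)$ and $C(Y,F)$ are endowed with the compact-open topology, then $T$ and $T^{-1}$ are continuous.
   Context: $\mathbb K=\mathbb R$ or $\mathbb C$; $E,F$ are $\mathbb K$-normed spaces; $C(Z,G)$ denotes the continuous $G$-valued functions on $Z$. The cozero set of $f$ is $c(f)=\{x: f(x)\neq0\}$. A map $T$ is separating if it is additive and $c(Tf)\cap c(Tg)=\emptyset$ whenever $c(f)\cap c(g)=\emptyset$; biseparating if it is bijective and both $T$ and $T^{-1}$ are separating. *)

theory Defs
  imports "HOL-Analysis.Analysis"
begin

text \<open>The index set is taken inside the type of real-valued
 functions on the points of the space (enough, since C(X) suffices as index set).\<close>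
definition realcompact_space :: "'a topology \<Rightarrow> bool" where
  "realcompact_space X \<longleftrightarrow>
     (\<exists>(I :: ('a \<Rightarrow> real) set) S.
        closedin (product_topology (\<lambda>_. euclideanreal) I) S \<and>
        X homeomorphic_space subtopology (product_topology (\<lambda>_. euclideanreal) I) S)"

definition cfun :: "'a topology \<Rightarrow> ('a \<Rightarrow> 'e::real_normed_vector) set" where
  "cfun X = {f. continuous_map X euclidean f \<and> (\<forall>x. x \<notin> topspace X \<longrightarrow> f x = 0)}"

definition cozero :: "'a topology \<Rightarrow> ('a \<Rightarrow> 'e::zero) \<Rightarrow> 'a set" where
  "cozero X f = {x \<in> topspace X. f x \<noteq> 0}"

definition separating ::
  "'a topology \<Rightarrow> 'b topology \<Rightarrow> (('a \<Rightarrow> 'e::real_normed_vector) \<Rightarrow> ('b \<Rightarrow> 'f::real_normed_vector)) \<Rightarrow> bool" where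
  "separating X Y T \<longleftrightarrow>
     (\<forall>f\<in>cfun X. \<forall>g\<in>cfun X. T (\<lambda>x. f x + g x) = (\<lambda>y. T f y + T g y)) \<and>
     (\<forall>f\<in>cfun X. \<forall>g\<in>cfun X. cozero X f \<inter> cozero X g = {} \<longrightarrow>
        cozero Y (T f) \<inter> cozero Y (T g) = {})"

definition biseparating ::
  "'a topology \<Rightarrow> 'b topology \<Rightarrow> (('a \<Rightarrow> 'e::real_normed_vector) \<Rightarrow> ('b \<Rightarrow> 'f::real_normed_vector)) \<Rightarrow> bool" where
  "biseparating X Y T \<longleftrightarrow>
     bij_betw T (cfun X) (cfun Y) \<and> separating X Y T \<and>
     separating Y X (inv_into (cfun X) T)"

definition linear_on_cfun ::
  "'a topology \<Rightarrow> (('a \<Rightarrow> 'e::real_normed_vector) \<Rightarrow> ('b \<Rightarrow> 'f::real_normed_vector)) \<Rightarrow> bool" where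
  "linear_on_cfun X T \<longleftrightarrow>
     (\<forall>f\<in>cfun X. \<forall>g\<in>cfun X. T (\<lambda>x. f x + g x) = (\<lambda>y. T f y + T g y)) \<and>
     (\<forall>c. \<forall>f\<in>cfun X. T (\<lambda>x. c *\<^sub>R f x) = (\<lambda>y. c *\<^sub>R T f y))"

definition compact_open_topology ::
  "'a topology \<Rightarrow> ('a \<Rightarrow> 'e::real_normed_vector) topology" where
  "compact_open_topology X = topology_generated_by
     {{f \<in> cfun X. f ` K \<subseteq> U} | K U. compactin X K \<and> open U}"

end

theory Submission
  imports Defs
begin
lemma continuous_map_scaleR':
  fixes g :: "'a \<Rightarrow> 'e::real_normed_vector"
  shows "continuous_map X euclideanreal f \<Longrightarrow> continuous_map X euclidean g \<Longrightarrow>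
    continuous_map X euclidean (\<lambda>x. f x *\<^sub>R g x)"
  by (simp add: continuous_map_atin tendsto_scaleR)

lemma fd_coord_bound:
  fixes B :: "'e::real_normed_vector set"
  assumes fin: "finite B" and ind: "independent B"
  shows "\<exists>M. \<forall>a. \<forall>b\<in>B. \<bar>a b\<bar> \<le> M * norm (\<Sum>c\<in>B. a c *\<^sub>R c)"
proof (cases "B = {}")
  case True then show ?thesis by auto
next
  case False
  define PT where "PT = product_topology (\<lambda>_::'e. euclideanreal) B"
  define Q where "Q = (\<Union>b\<in>B. {a::'e\<Rightarrow>real. a \<in> PiE B (\<lambda>_. {-1..1}) \<and> \<bar>a b\<bar> = 1})"
  define g where "g = (\<lambda>a::'e\<Rightarrow>real. norm (\<Sum>c\<in>B. a c *\<^sub>R c))"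
  have cube: "compactin PT (PiE B (\<lambda>_. {-1..1}))"
    unfolding PT_def by (simp add: compactin_PiE)
  have proj: "continuous_map PT euclideanreal (\<lambda>a. a b)" if "b \<in> B" for b
    unfolding PT_def using continuous_map_product_projection[OF that, of "\<lambda>_. euclideanreal"] by simp
  have "compactin PT {a \<in> PiE B (\<lambda>_. {-1..1}). \<bar>a b\<bar> = 1}" if "b \<in> B" for b
  proof -
    have cl: "closedin PT {a \<in> topspace PT. \<bar>a b\<bar> \<in> {1}}"
      by (rule closedin_continuous_map_preimage[where Y=euclideanreal]) (auto intro!: continuous_map_real_abs proj that)
    have eq: "{a \<in> PiE B (\<lambda>_. {-1..1}). \<bar>a b\<bar> = 1} = {a \<in> topspace PT. \<bar>a b\<bar> \<in> {1}} \<inter> PiE B (\<lambda>_. {-1..1})"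
    proof -
      have "PiE B (\<lambda>_. {-1..1::real}) \<subseteq> topspace PT"
        unfolding PT_def topspace_product_topology by (rule PiE_mono) auto
      then show ?thesis by auto
    qed
    show ?thesis by (subst eq) (rule closed_Int_compactin[OF cl cube])
  qed
  then have cQ: "compactin PT Q" unfolding Q_def using fin by (intro compactin_Union) auto
  have cg: "continuous_map PT euclideanreal g"
    unfolding g_def
    by (intro continuous_map_norm continuous_map_sum fin continuous_map_scaleR' proj) auto
  have "compact (g ` Q)" using image_compactin[OF cQ cg] by simp
  moreover obtain b0 where b0: "b0 \<in> B" using False by auto
  have "(\<lambda>c\<in>B. if c = b0 then 1 else 0) \<in> PiE B (\<lambda>_. {-1..1::real})"
    by (rule restrict_PiE_iff[THEN iffD2]) auto
  then have "(\<lambda>c\<in>B. if c = b0 then 1 else 0) \<in> Q" unfolding Q_def using b0 by auto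
  then have "g ` Q \<noteq> {}" by blast
  ultimately obtain m where m: "m \<in> g ` Q" "\<And>z. z \<in> g ` Q \<Longrightarrow> m \<le> z"
    using compact_attains_inf by metis
  then obtain a0 where a0: "a0 \<in> Q" "\<And>a. a \<in> Q \<Longrightarrow> g a0 \<le> g a"
    by blast
  have "g a0 > 0"
  proof (rule ccontr)
    assume "\<not> g a0 > 0"
    then have "(\<Sum>c\<in>B. a0 c *\<^sub>R c) = 0" unfolding g_def by simp
    then have "\<forall>c\<in>B. a0 c = 0" using ind fin independent_explicit_finite_subsets
      by (metis dual_order.refl)
    then show False using a0(1) unfolding Q_def by auto
  qed
  show ?thesis
  proof (intro exI allI ballI)
    fix a :: "'e \<Rightarrow> real" and b assume b: "b \<in> B"
    define s where "s = Max ((\<lambda>c. \<bar>a c\<bar>) ` B)"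
    have sb: "\<bar>a c\<bar> \<le> s" if "c \<in> B" for c unfolding s_def using fin that by auto
    obtain c1 where c1: "c1 \<in> B" "s = \<bar>a c1\<bar>" unfolding s_def using fin False
      by (metis (no_types, lifting) Max_in finite_imageI image_iff image_is_empty)
    show "\<bar>a b\<bar> \<le> (1 / g a0) * norm (\<Sum>c\<in>B. a c *\<^sub>R c)"
    proof (cases "s = 0")
      case True then show ?thesis using sb[OF b] \<open>g a0 > 0\<close> by auto
    next
      case False
      then have spos: "s > 0" using sb[OF b] by linarith
      define a' where "a' = (\<lambda>c\<in>B. a c / s)"
      have "a' \<in> PiE B (\<lambda>_. {-1..1})"
      proof -
        have "a c / s \<in> {-1..1}" if "c \<in> B" for c using sb[OF that] spos
          by (auto simp: abs_le_iff field_simps)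
        then show ?thesis unfolding a'_def by (intro restrict_PiE_iff[THEN iffD2]) auto
      qed
      moreover have "\<bar>a' c1\<bar> = 1" unfolding a'_def using c1 spos by (simp add: abs_divide)
      ultimately have "a' \<in> Q" unfolding Q_def using c1(1) by blast
      then have "g a0 \<le> g a'" by (rule a0(2))
      also have "g a' = norm (\<Sum>c\<in>B. a c *\<^sub>R c) / s"
      proof -
        have "(\<Sum>c\<in>B. a' c *\<^sub>R c) = (1/s) *\<^sub>R (\<Sum>c\<in>B. a c *\<^sub>R c)"
          unfolding a'_def scaleR_sum_right by (intro sum.cong) auto
        then show ?thesis unfolding g_def using spos by simp
      qed
      finally have "s \<le> (1 / g a0) * norm (\<Sum>c\<in>B. a c *\<^sub>R c)" using spos \<open>g a0 > 0\<close>
        by (simp add: field_simps)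
      then show ?thesis using sb[OF b] by linarith
    qed
  qed
qed

lemma cfunD: "f \<in> cfun X \<Longrightarrow> continuous_map X euclidean f"
  "f \<in> cfun X \<Longrightarrow> x \<notin> topspace X \<Longrightarrow> f x = 0"
  by (auto simp: cfun_def)

lemma cfun_nz: "f \<in> cfun X \<Longrightarrow> f x \<noteq> 0 \<Longrightarrow> x \<in> topspace X"
  by (auto simp: cfun_def)

lemma cfun_add: "f \<in> cfun X \<Longrightarrow> g \<in> cfun X \<Longrightarrow> (\<lambda>x. f x + g x) \<in> cfun X"
  by (auto simp: cfun_def intro: continuous_map_add)

lemma cfun_diff: "f \<in> cfun X \<Longrightarrow> g \<in> cfun X \<Longrightarrow> (\<lambda>x. f x - g x) \<in> cfun X"
  by (auto simp: cfun_def intro: continuous_map_diff)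

lemma cfun_mult: "continuous_map X euclideanreal a \<Longrightarrow> f \<in> cfun X \<Longrightarrow> (\<lambda>x. a x *\<^sub>R f x) \<in> cfun X"
  by (auto simp: cfun_def intro: continuous_map_scaleR')

lemma cfun_scale: "f \<in> cfun X \<Longrightarrow> (\<lambda>x. c *\<^sub>R f x) \<in> cfun X"
  using cfun_mult[of X "\<lambda>_. c" f] by simp

lemma cfun_zero: "(\<lambda>x. 0) \<in> cfun X"
  by (auto simp: cfun_def)

definition constf :: "'a topology \<Rightarrow> 'e::real_normed_vector \<Rightarrow> 'a \<Rightarrow> 'e" where
  "constf X v = (\<lambda>x. if x \<in> topspace X then v else 0)"

lemma cfun_const: "constf X v \<in> cfun X"
proof -
  have "continuous_map X euclidean (\<lambda>x. v)" by simp
  then have "continuous_map X euclidean (constf X v)"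
    by (rule continuous_map_eq) (auto simp: constf_def)
  then show ?thesis by (auto simp: cfun_def constf_def)
qed

lemma cozero_cfun: "f \<in> cfun X \<Longrightarrow> cozero X f = {x. f x \<noteq> 0}"
  by (auto simp: cozero_def cfun_def)

lemma separatingD:
  assumes "separating X Y T" "f \<in> cfun X" "g \<in> cfun X" "\<And>x. f x \<noteq> 0 \<Longrightarrow> g x = 0"
    "T f \<in> cfun Y" "T g \<in> cfun Y"
  shows "T f y = 0 \<or> T g y = 0"
proof -
  have "cozero X f \<inter> cozero X g = {}" using assms(4) by (auto simp: cozero_def)
  then have "cozero Y (T f) \<inter> cozero Y (T g) = {}" using assms(1-3) by (auto simp: separating_def)
  then show ?thesis using assms(5,6) by (auto simp: cozero_def cfun_def)
qed

lemma separating_cong: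
  assumes "separating X Y T" "\<And>f. f \<in> cfun X \<Longrightarrow> T' f = T f"
  shows "separating X Y T'"
proof -
  have "T' (\<lambda>x. f x + g x) = (\<lambda>y. T' f y + T' g y)" if f: "f \<in> cfun X" and g: "g \<in> cfun X" for f g
  proof -
    have "T' (\<lambda>x. f x + g x) = T (\<lambda>x. f x + g x)" using assms(2) cfun_add f g by blast
    also have "\<dots> = (\<lambda>y. T f y + T g y)" using assms(1) f g unfolding separating_def by blast
    also have "\<dots> = (\<lambda>y. T' f y + T' g y)" using assms(2) f g by simp
    finally show ?thesis .
  qed
  moreover have "cozero Y (T' f) \<inter> cozero Y (T' g) = {}"
    if f: "f \<in> cfun X" and g: "g \<in> cfun X" and d: "cozero X f \<inter> cozero X g = {}" for f g
  proof -
    have "cozero Y (T f) \<inter> cozero Y (T g) = {}" using assms(1) f g d unfolding separating_def by blast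
    then show ?thesis using assms(2)[OF f] assms(2)[OF g] by simp
  qed
  ultimately show ?thesis unfolding separating_def by blast
qed

locale bisep =
  fixes X :: "'a topology" and Y :: "'b topology"
    and T :: "('a \<Rightarrow> 'e::real_normed_vector) \<Rightarrow> ('b \<Rightarrow> 'f::real_normed_vector)"
  assumes crY: "completely_regular_space Y" and rcX: "realcompact_space X"
    and fdE: "\<exists>B::'e set. finite B \<and> span B = UNIV"
    and lin: "linear_on_cfun X T" and bis: "biseparating X Y T"
begin

abbreviation "S \<equiv> inv_into (cfun X) T"

lemma bij: "bij_betw T (cfun X) (cfun Y)" using bis by (simp add: biseparating_def)

lemma T_in: "f \<in> cfun X \<Longrightarrow> T f \<in> cfun Y" using bij by (auto simp: bij_betw_def)
lemma S_in: "g \<in> cfun Y \<Longrightarrow> S g \<in> cfun X" using bij by (metis bij_betw_imp_surj_on inv_into_into)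
lemma TS: "g \<in> cfun Y \<Longrightarrow> T (S g) = g" using bij by (metis bij_betw_imp_surj_on f_inv_into_f)
lemma ST: "f \<in> cfun X \<Longrightarrow> S (T f) = f" using bij by (meson bij_betw_inv_into_left)

lemma T_add: "f \<in> cfun X \<Longrightarrow> g \<in> cfun X \<Longrightarrow> T (\<lambda>x. f x + g x) = (\<lambda>y. T f y + T g y)"
  using lin by (simp add: linear_on_cfun_def)
lemma T_scale: "f \<in> cfun X \<Longrightarrow> T (\<lambda>x. c *\<^sub>R f x) = (\<lambda>y. c *\<^sub>R T f y)"
  using lin by (simp add: linear_on_cfun_def)
lemma T_zero: "T (\<lambda>x. 0) = (\<lambda>y. 0)"
  using T_scale[OF cfun_zero, of 0] by simp
lemma T_diff: "f \<in> cfun X \<Longrightarrow> g \<in> cfun X \<Longrightarrow> T (\<lambda>x. f x - g x) = (\<lambda>y. T f y - T g y)"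
proof -
  assume f: "f \<in> cfun X" and g: "g \<in> cfun X"
  have "T (\<lambda>x. f x - g x) = T (\<lambda>x. f x + (-1) *\<^sub>R g x)" by simp
  also have "\<dots> = (\<lambda>y. T f y + T (\<lambda>x. (-1) *\<^sub>R g x) y)" by (rule T_add[OF f cfun_scale[OF g]])
  also have "\<dots> = (\<lambda>y. T f y - T g y)" using T_scale[OF g, of "-1"] by simp
  finally show ?thesis .
qed
lemma T_diff_pt: "f \<in> cfun X \<Longrightarrow> g \<in> cfun X \<Longrightarrow> T (\<lambda>x. f x - g x) y = T f y - T g y"
  using T_diff by metis

lemma sepT: "f \<in> cfun X \<Longrightarrow> g \<in> cfun X \<Longrightarrow> (\<And>x. f x \<noteq> 0 \<Longrightarrow> g x = 0) \<Longrightarrow> T f y = 0 \<or> T g y = 0"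
  using bis by (intro separatingD[of X Y T]) (auto simp: biseparating_def T_in)

lemma sepS: "f \<in> cfun Y \<Longrightarrow> g \<in> cfun Y \<Longrightarrow> (\<And>x. f x \<noteq> 0 \<Longrightarrow> g x = 0) \<Longrightarrow> S f x = 0 \<or> S g x = 0"
  using bis by (intro separatingD[of Y X S]) (auto simp: biseparating_def S_in)

definition nullset :: "'b \<Rightarrow> 'a set \<Rightarrow> bool" where
  "nullset y W \<longleftrightarrow> (\<forall>f\<in>cfun X. (\<forall>x. f x \<noteq> 0 \<longrightarrow> x \<in> W) \<longrightarrow> T f y = 0)"

lemma nullset_mono: "nullset y W \<Longrightarrow> W' \<subseteq> W \<Longrightarrow> nullset y W'"
  unfolding nullset_def by blast

lemma nullset_empty: "nullset y {}"
  unfolding nullset_def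
proof (intro ballI impI)
  fix f :: "'a \<Rightarrow> 'e" assume "f \<in> cfun X" "\<forall>x. f x \<noteq> 0 \<longrightarrow> x \<in> {}"
  then have "f = (\<lambda>x. 0)" by auto
  then show "T f y = 0" using T_zero by simp
qed

end

definition Dw :: "real \<Rightarrow> real" where "Dw t = (1 + cos (pi * t)) / 2"
definition ne :: "real \<Rightarrow> real" where "ne t = 2 * of_int (round (t / 2))"

lemma Dw_cont: "continuous_on UNIV Dw"
  unfolding Dw_def by (intro continuous_intros) auto

lemma Dw_range: "0 \<le> Dw t" "Dw t \<le> 1"
proof -
  have "-1 \<le> cos (pi*t)" "cos (pi*t) \<le> 1" by simp_all
  moreover have h: "\<And>c::real. -1 \<le> c \<Longrightarrow> 0 \<le> (1+c)/2" "\<And>c::real. c \<le> 1 \<Longrightarrow> (1+c)/2 \<le> 1" by auto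
  ultimately show "0 \<le> Dw t" "Dw t \<le> 1" unfolding Dw_def by blast+
qed

lemma Dw_shift: "Dw t + Dw (t + 1) = 1"
  unfolding Dw_def by (simp add: distrib_left field_simps)

lemma ne_close: "\<bar>t - ne t\<bar> \<le> 1"
  using of_int_round_abs_le[of "t/2"] unfolding ne_def by linarith

lemma ne_abs: "\<bar>ne t\<bar> \<le> \<bar>t\<bar> + 1"
  using ne_close[of t] by linarith

lemma ne_eq: "\<bar>t - 2 * of_int m\<bar> < 1 \<Longrightarrow> ne t = 2 * of_int m"
proof -
  assume a: "\<bar>t - 2 * of_int m\<bar> < 1"
  have "-1 < t - 2 * of_int m" "t - 2 * of_int m < 1" using a by auto
  then have "\<bar>t/2 - of_int m\<bar> < 1/2" unfolding abs_less_iff by linarith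
  then show ?thesis unfolding ne_def using round_unique'[of "t/2" m] by simp
qed

lemma ne_even: "\<exists>m. ne t = 2 * of_int m"
  unfolding ne_def by blast

lemma Dw_odd: "Dw (2 * of_int m + 1) = 0" "Dw (2 * of_int m - 1) = 0"
proof -
  have "cos (pi * (2 * of_int m + 1)) = cos (pi * of_int (2*m+1))" by simp
  also have "\<dots> = -1" by (subst cos_npi_int) auto
  finally show "Dw (2 * of_int m + 1) = 0" unfolding Dw_def by simp
  have "cos (pi * (2 * of_int m - 1)) = cos (pi * of_int (2*m-1))" by simp
  also have "\<dots> = -1" by (subst cos_npi_int) auto
  finally show "Dw (2 * of_int m - 1) = 0" unfolding Dw_def by simp
qed

lemma Dw_nz_close: "Dw t \<noteq> 0 \<Longrightarrow> \<bar>t - ne t\<bar> < 1"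
proof (rule ccontr)
  assume nz: "Dw t \<noteq> 0" and "\<not> \<bar>t - ne t\<bar> < 1"
  then have "\<bar>t - ne t\<bar> = 1" using ne_close[of t] by linarith
  moreover obtain m where m: "ne t = 2 * of_int m" using ne_even by blast
  ultimately have "t = 2 * of_int m + 1 \<or> t = 2 * of_int m - 1" by linarith
  then show False using nz Dw_odd by auto
qed

lemma LC: "continuous_on UNIV (\<lambda>t. \<psi> (ne t) * Dw t)"
proof -
  have "isCont (\<lambda>t. \<psi> (ne t) * Dw t) t0" for t0
  proof (cases "\<bar>t0 - ne t0\<bar> < 1")
    case True
    obtain m where m: "ne t0 = 2 * of_int m" using ne_even by blast
    define d where "d = 1 - \<bar>t0 - ne t0\<bar>"
    have d: "d > 0" using True d_def by simp
    have ev: "eventually (\<lambda>t. \<psi> (ne t0) * Dw t = \<psi> (ne t) * Dw t) (nhds t0)"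
    proof -
      have "eventually (\<lambda>t. t \<in> ball t0 d) (nhds t0)"
        using d by (intro eventually_nhds_in_open) auto
      then show ?thesis
      proof (rule eventually_mono)
        fix t assume "t \<in> ball t0 d"
        then have "\<bar>t - 2 * of_int m\<bar> < 1" using m d_def by (auto simp: dist_real_def)
        then show "\<psi> (ne t0) * Dw t = \<psi> (ne t) * Dw t" using ne_eq m by simp
      qed
    qed
    have "isCont (\<lambda>t. \<psi> (ne t0) * Dw t) t0"
      using Dw_cont by (intro continuous_intros) (simp add: continuous_on_eq_continuous_at)
    moreover have "eventually (\<lambda>t. \<psi> (ne t0) * Dw t = \<psi> (ne t) * Dw t) (at t0)"
      using ev by (simp add: eventually_at_filter eventually_mono)
    ultimately show ?thesis unfolding isCont_def
      using Lim_transform_eventually by fastforce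
  next
    case False
    then have "\<bar>t0 - ne t0\<bar> = 1" using ne_close[of t0] by linarith
    moreover obtain m where m: "ne t0 = 2 * of_int m" using ne_even by blast
    ultimately have t0: "t0 = 2 * of_int m + 1 \<or> t0 = 2 * of_int m - 1" by linarith
    then have D0: "Dw t0 = 0" using Dw_odd by auto
    have "\<exists>a. t0 = 2 * of_int a + 1"
      using t0
    proof (elim disjE)
      assume "t0 = 2 * of_int m - 1"
      then show ?thesis by (intro exI[of _ "m - 1"]) simp
    qed auto
    then obtain a where a: "t0 = 2 * of_int a + 1" by blast
    define K where "K = max \<bar>\<psi> (2 * of_int a)\<bar> \<bar>\<psi> (2 * of_int (a+1))\<bar>"
    have bnd: "eventually (\<lambda>t. norm (\<psi> (ne t) * Dw t) \<le> K * Dw t) (nhds t0)"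
    proof -
      have "eventually (\<lambda>t. t \<in> ball t0 1) (nhds t0)"
        by (intro eventually_nhds_in_open) auto
      then show ?thesis
      proof (rule eventually_mono)
        fix t assume t: "t \<in> ball t0 1"
        then have t': "\<bar>t - t0\<bar> < 1" by (simp add: dist_real_def abs_minus_commute)
        show "norm (\<psi> (ne t) * Dw t) \<le> K * Dw t"
        proof (cases "t = t0")
          case True then show ?thesis using D0 by simp
        next
          case False
          have "ne t = 2 * of_int a \<or> ne t = 2 * of_int (a+1)"
          proof (cases "t < t0")
            case True
            then have "\<bar>t - 2 * of_int a\<bar> < 1" using t' a by auto
            then show ?thesis using ne_eq by blast
          next
            case False
            then have "\<bar>t - 2 * of_int (a+1)\<bar> < 1" using t' a \<open>t \<noteq> t0\<close> by auto
            then show ?thesis using ne_eq by blast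
          qed
          then have "\<bar>\<psi> (ne t)\<bar> \<le> K" unfolding K_def by auto
          then show ?thesis
            using Dw_range[of t] by (simp add: abs_mult mult_right_mono)
        qed
      qed
    qed
    then have bnd': "eventually (\<lambda>t. norm (\<psi> (ne t) * Dw t) \<le> K * Dw t) (at t0)"
      by (simp add: eventually_at_filter eventually_mono)
    have "isCont Dw t0" using Dw_cont continuous_on_eq_continuous_at by blast
    then have "((\<lambda>t. K * Dw t) \<longlongrightarrow> K * Dw t0) (at t0)"
      by (intro tendsto_intros) (simp add: isCont_def)
    then have "((\<lambda>t. K * Dw t) \<longlongrightarrow> 0) (at t0)" using D0 by simp
    then have "((\<lambda>t. \<psi> (ne t) * Dw t) \<longlongrightarrow> 0) (at t0)"
      by (rule Lim_null_comparison[OF bnd'])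
    then show ?thesis using D0 unfolding isCont_def by simp
  qed
  then show ?thesis by (simp add: continuous_on_eq_continuous_at)
qed

lemma atin_le_within_open:
  assumes "openin X U" "x \<in> U"
  shows "atin X x \<le> atin_within X x U"
  unfolding le_filter_def
proof (intro allI impI)
  fix P assume "eventually P (atin_within X x U)"
  then have "x \<notin> topspace X \<or> (\<exists>T. openin X T \<and> x \<in> T \<and> (\<forall>z\<in>T. z \<in> U \<and> z \<noteq> x \<longrightarrow> P z))"
    unfolding eventually_atin_within .
  then show "eventually P (atin X x)" unfolding eventually_atin
  proof (elim disjE)
    assume "x \<notin> topspace X"
    then show "x \<notin> topspace X \<or> (\<exists>V. openin X V \<and> x \<in> V \<and> (\<forall>z\<in>V - {x}. P z))" by simp
  next
    assume "\<exists>T. openin X T \<and> x \<in> T \<and> (\<forall>z\<in>T. z \<in> U \<and> z \<noteq> x \<longrightarrow> P z)"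
    then obtain T where T: "openin X T" "x \<in> T" "\<forall>z\<in>T. z \<in> U \<and> z \<noteq> x \<longrightarrow> P z" by blast
    have "openin X (T \<inter> U)" using T(1) assms(1) by auto
    moreover have "x \<in> T \<inter> U" using T(2) assms(2) by auto
    moreover have "\<forall>z\<in>(T \<inter> U) - {x}. P z" using T(3) by auto
    ultimately show "x \<notin> topspace X \<or> (\<exists>V. openin X V \<and> x \<in> V \<and> (\<forall>z\<in>V - {x}. P z))" by blast
  qed
qed

lemma GCL:
  fixes f :: "'a \<Rightarrow> 'e::real_normed_vector" and g :: "'a \<Rightarrow> 'g::real_normed_vector"
  assumes f: "continuous_map X euclidean f"
   and gz: "\<And>x. x \<in> topspace X \<Longrightarrow> f x = 0 \<Longrightarrow> g x = 0"
   and gc: "continuous_map (subtopology X {x \<in> topspace X. f x \<noteq> 0}) euclidean g"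
   and gb: "\<And>x. x \<in> topspace X \<Longrightarrow> norm (g x) \<le> c * (sqrt (norm (f x)) + norm (f x))"
  shows "continuous_map X euclidean g"
proof -
  let ?U = "{x \<in> topspace X. f x \<noteq> 0}"
  have "openin X {x \<in> topspace X. f x \<in> -{0}}"
    by (rule openin_continuous_map_preimage[OF f]) auto
  then have U: "openin X ?U" by simp
  show ?thesis unfolding continuous_map_atin limitin_canonical_iff
  proof
    fix x assume x: "x \<in> topspace X"
    show "(g \<longlongrightarrow> g x) (atin X x)"
    proof (cases "f x = 0")
      case False
      then have xU: "x \<in> ?U" using x by simp
      have "limitin euclidean g (g x) (atin_within X x ?U)"
        by (rule limit_continuous_map_within[OF gc xU x])
      then have "(g \<longlongrightarrow> g x) (atin_within X x ?U)" by simp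
      then show ?thesis by (rule tendsto_mono[OF atin_le_within_open[OF U xU]])
    next
      case True
      then have g0: "g x = 0" using gz x by simp
      have "limitin euclidean f (f x) (atin X x)" by (rule limitin_continuous_map[OF f x refl])
      then have "(f \<longlongrightarrow> 0) (atin X x)" using True by simp
      then have "((\<lambda>z. c * (sqrt (norm (f z)) + norm (f z))) \<longlongrightarrow> c * (sqrt (norm (0::'e)) + norm (0::'e))) (atin X x)"
        by (intro tendsto_intros)
      then have lim: "((\<lambda>z. c * (sqrt (norm (f z)) + norm (f z))) \<longlongrightarrow> 0) (atin X x)" by simp
      have "eventually (\<lambda>z. z \<in> topspace X) (atin X x)"
        unfolding eventually_atin using x by auto
      then have "eventually (\<lambda>z. norm (g z) \<le> c * (sqrt (norm (f z)) + norm (f z))) (atin X x)"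
        by (rule eventually_mono) (rule gb)
      then have "(g \<longlongrightarrow> 0) (atin X x)" by (rule Lim_null_comparison[OF _ lim])
      then show ?thesis using g0 by simp
    qed
  qed
qed

definition Cls :: "(real \<Rightarrow> real) \<Rightarrow> bool" where
  "Cls \<beta> \<longleftrightarrow> continuous_on UNIV \<beta> \<and> (\<exists>c. \<forall>t. \<bar>\<beta> t\<bar> \<le> c * (\<bar>t\<bar> + 1))"

definition phi :: "('a \<Rightarrow> real) \<Rightarrow> ('a \<Rightarrow> 'e::real_normed_vector) \<Rightarrow> (real \<Rightarrow> real) \<Rightarrow> 'a \<Rightarrow> 'e" where
  "phi u f0 \<beta> = (\<lambda>x. \<beta> (u x) *\<^sub>R f0 x)"

lemma Cls_Dw: "Cls Dw"
  unfolding Cls_def using Dw_cont Dw_range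
  by (auto intro!: exI[of _ 1]) (smt (verit))

lemma Cls_LC: "(\<And>t. \<bar>\<psi> (ne t)\<bar> \<le> c * (\<bar>t\<bar> + 1)) \<Longrightarrow> Cls (\<lambda>t. \<psi> (ne t) * Dw t)"
  unfolding Cls_def
proof (intro conjI LC exI allI)
  fix t assume h: "\<And>t. \<bar>\<psi> (ne t)\<bar> \<le> c * (\<bar>t\<bar> + 1)"
  have "\<bar>\<psi> (ne t) * Dw t\<bar> \<le> \<bar>\<psi> (ne t)\<bar>"
    using Dw_range[of t] by (simp add: abs_mult mult_left_le)
  then show "\<bar>\<psi> (ne t) * Dw t\<bar> \<le> c * (\<bar>t\<bar> + 1)" using h[of t] by linarith
qed

lemma Cls_diff: "Cls a \<Longrightarrow> Cls b \<Longrightarrow> Cls (\<lambda>t. a t - b t)"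
  unfolding Cls_def
proof (elim conjE exE, intro conjI continuous_intros exI allI)
  fix ca cb t assume "\<forall>t. \<bar>a t\<bar> \<le> ca * (\<bar>t\<bar> + 1)" "\<forall>t. \<bar>b t\<bar> \<le> cb * (\<bar>t\<bar> + 1)"
  then have "\<bar>a t\<bar> \<le> ca * (\<bar>t\<bar> + 1)" "\<bar>b t\<bar> \<le> cb * (\<bar>t\<bar> + 1)" by auto
  moreover have "\<bar>a t - b t\<bar> \<le> \<bar>a t\<bar> + \<bar>b t\<bar>" by (rule abs_triangle_ineq4)
  ultimately show "\<bar>a t - b t\<bar> \<le> (ca + cb) * (\<bar>t\<bar> + 1)" by (simp add: distrib_right)
qed auto

lemma Cls_scale: "Cls a \<Longrightarrow> Cls (\<lambda>t. k * a t)"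
  unfolding Cls_def
proof (elim conjE exE, intro conjI continuous_intros exI allI)
  fix ca t assume "\<forall>t. \<bar>a t\<bar> \<le> ca * (\<bar>t\<bar> + 1)"
  then have "\<bar>a t\<bar> \<le> ca * (\<bar>t\<bar> + 1)" by auto
  then have "\<bar>k\<bar> * \<bar>a t\<bar> \<le> \<bar>k\<bar> * (ca * (\<bar>t\<bar> + 1))" by (simp add: mult_left_mono)
  then show "\<bar>k * a t\<bar> \<le> (\<bar>k\<bar> * ca) * (\<bar>t\<bar> + 1)" by (simp add: abs_mult mult.assoc)
qed auto

lemma phi_diff: "phi u f0 (\<lambda>t. a t - b t) = (\<lambda>x. phi u f0 a x - phi u f0 b x)"
  unfolding phi_def by (simp add: scaleR_diff_left)

lemma phi_scale: "phi u f0 (\<lambda>t. k * a t) = (\<lambda>x. k *\<^sub>R phi u f0 a x)"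
  unfolding phi_def by simp

lemma phi_disj: "(\<And>t. a t * b t = 0) \<Longrightarrow> phi u f0 a x \<noteq> 0 \<Longrightarrow> phi u f0 b x = 0"
  unfolding phi_def by (metis mult_eq_0_iff scaleR_eq_0_iff)

definition "Ew t = ne t * Dw t"
definition "DK K t = (if \<bar>ne t\<bar> > K then 1 else 0) * Dw t"
definition "Bk k t = (if ne t = k then 1 else 0) * Dw t"

lemma Cls_Ew: "Cls Ew"
  unfolding Ew_def using Cls_LC[of id 1] ne_abs by simp

lemma Cls_DK: "Cls (DK K)"
  unfolding DK_def by (rule Cls_LC[where c=1]) auto

lemma Cls_Bk: "Cls (Bk k)"
  unfolding Bk_def by (rule Cls_LC[where c=1]) auto

lemma Bk_disj1: "Bk k t * (Dw t - Bk k t) = 0" by (simp add: Bk_def)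
lemma Bk_disj2: "Bk k t * (Ew t - k * Bk k t) = 0" by (simp add: Bk_def Ew_def)

context bisep
begin

lemma crux:
  assumes y: "y \<in> topspace Y" and f0: "f0 \<in> cfun X"
   and A1: "\<And>\<beta>. Cls \<beta> \<Longrightarrow> phi u f0 \<beta> \<in> cfun X"
   and A2: "\<And>\<beta> n. Cls \<beta> \<Longrightarrow> (\<forall>t. \<bar>t\<bar> \<ge> n \<longrightarrow> \<beta> t = 0) \<Longrightarrow> T (phi u f0 \<beta>) y = 0"
   and A3: "T (phi u f0 Dw) y \<noteq> 0"
  shows False
proof -
  define g where "g = phi u f0 Dw"
  define G where "G = phi u f0 Ew"
  define w where "w = T g y"
  have w0: "w \<noteq> 0" using A3 unfolding w_def g_def .
  have gA: "g \<in> cfun X" unfolding g_def by (rule A1[OF Cls_Dw])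
  have GA: "G \<in> cfun X" unfolding G_def by (rule A1[OF Cls_Ew])
  have cTg: "continuous_map Y euclidean (T g)" using T_in[OF gA] by (simp add: cfun_def)
  have cTG: "continuous_map Y euclidean (T G)" using T_in[OF GA] by (simp add: cfun_def)
  define M where "M = norm (T G y) + 1"
  define V where "V = {y' \<in> topspace Y. norm (T G y') < M \<and> norm (T g y') > norm w / 2}"
  have "openin Y {y' \<in> topspace Y. norm (T G y') \<in> {..<M}}"
    by (rule openin_continuous_map_preimage[OF continuous_map_norm[OF cTG]]) auto
  moreover have "openin Y {y' \<in> topspace Y. norm (T g y') \<in> {norm w / 2<..}}"
    by (rule openin_continuous_map_preimage[OF continuous_map_norm[OF cTg]]) auto
  ultimately have "openin Y ({y' \<in> topspace Y. norm (T G y') \<in> {..<M}} \<inter> {y' \<in> topspace Y. norm (T g y') \<in> {norm w / 2<..}})"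
    by (rule openin_Int)
  moreover have "V = {y' \<in> topspace Y. norm (T G y') \<in> {..<M}} \<inter> {y' \<in> topspace Y. norm (T g y') \<in> {norm w / 2<..}}"
    unfolding V_def by auto
  ultimately have Vopen: "openin Y V" by simp
  have nw: "norm w > 0" using w0 by simp
  have yV: "y \<in> V" unfolding V_def M_def using y nw by (simp add: w_def)
  obtain K :: nat where K: "real K > 2 * M / norm w" using reals_Archimedean2 by blast
  define R where "R = phi u f0 (DK (real K))"
  have RA: "R \<in> cfun X" unfolding R_def by (rule A1[OF Cls_DK])
  have TR: "T R y = w"
  proof -
    have "T (phi u f0 (\<lambda>t. Dw t - DK (real K) t)) y = 0"
    proof (rule A2[of _ "real K + 2"])
      show "Cls (\<lambda>t. Dw t - DK (real K) t)" by (intro Cls_diff Cls_Dw Cls_DK)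
      show "\<forall>t. real K + 2 \<le> \<bar>t\<bar> \<longrightarrow> Dw t - DK (real K) t = 0"
      proof (intro allI impI)
        fix t assume "real K + 2 \<le> \<bar>t\<bar>"
        then have "\<bar>ne t\<bar> > real K" using ne_close[of t] by linarith
        then show "Dw t - DK (real K) t = 0" unfolding DK_def by simp
      qed
    qed
    then have "T (\<lambda>x. g x - R x) y = 0" unfolding g_def R_def phi_diff .
    then show ?thesis using T_diff_pt[OF gA RA] w_def by simp
  qed
  have "\<exists>k y'. (\<exists>m. k = 2 * of_int m) \<and> \<bar>k\<bar> > real K \<and> y' \<in> V \<and> T (phi u f0 (Bk k)) y' \<noteq> 0"
  proof (rule ccontr)
    assume "\<not> ?thesis"
    then have H: "\<And>k y'. (\<exists>m. k = 2 * of_int m) \<Longrightarrow> \<bar>k\<bar> > real K \<Longrightarrow> y' \<in> V \<Longrightarrow> T (phi u f0 (Bk k)) y' = 0"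
      by blast
    have "closedin Y (topspace Y - V)" using Vopen by blast
    moreover have "y \<in> topspace Y - (topspace Y - V)" using yV y by blast
    ultimately obtain \<psi> :: "'b \<Rightarrow> real" where
      \<psi>: "continuous_map Y (top_of_set {0..1}) \<psi>" "\<psi> y = 0" "\<psi> ` (topspace Y - V) \<subseteq> {1}"
      using crY unfolding completely_regular_space_def by metis
    have c\<psi>: "continuous_map Y euclideanreal \<psi>" using \<psi>(1) continuous_map_in_subtopology by blast
    define \<phi> where "\<phi> = (\<lambda>y'. if y' \<in> topspace Y then (1 - \<psi> y') *\<^sub>R w else 0)"
    have "continuous_map Y euclidean (\<lambda>y'. (1 - \<psi> y') *\<^sub>R w)"
      by (intro continuous_map_scaleR' continuous_map_diff c\<psi>) auto
    then have "continuous_map Y euclidean \<phi>"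
      by (rule continuous_map_eq) (simp add: \<phi>_def)
    then have \<phi>A: "\<phi> \<in> cfun Y" unfolding cfun_def \<phi>_def by auto
    define p where "p = S \<phi>"
    have pA: "p \<in> cfun X" unfolding p_def by (rule S_in[OF \<phi>A])
    have Tp: "T p = \<phi>" unfolding p_def by (rule TS[OF \<phi>A])
    have pk: "p x = 0 \<or> phi u f0 (Bk k) x = 0" if k: "\<exists>m. k = 2 * of_int m" "\<bar>k\<bar> > real K" for k x
    proof -
      have BA: "phi u f0 (Bk k) \<in> cfun X" by (rule A1[OF Cls_Bk])
      have "T (phi u f0 (Bk k)) y' = 0" if "\<phi> y' \<noteq> 0" for y'
      proof -
        have "y' \<in> topspace Y" "\<psi> y' \<noteq> 1" using that unfolding \<phi>_def by (auto split: if_splits)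
        then have "y' \<in> V" using \<psi>(3) by blast
        then show ?thesis by (rule H[OF k])
      qed
      then have "S \<phi> x = 0 \<or> S (T (phi u f0 (Bk k))) x = 0"
        by (intro sepS[OF \<phi>A T_in[OF BA]]) 
      then show ?thesis using ST[OF BA] p_def by simp
    qed
    have "R x = 0" if "p x \<noteq> 0" for x
    proof (rule ccontr)
      assume "R x \<noteq> 0"
      then have D: "DK (real K) (u x) \<noteq> 0" and f0x: "f0 x \<noteq> 0" unfolding R_def phi_def by auto
      then have k: "\<bar>ne (u x)\<bar> > real K" and Dn: "Dw (u x) \<noteq> 0" unfolding DK_def by (auto split: if_splits)
      have "Bk (ne (u x)) (u x) \<noteq> 0" unfolding Bk_def using Dn by simp
      then have "phi u f0 (Bk (ne (u x))) x \<noteq> 0" using f0x unfolding phi_def by simp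
      then show False using pk[OF ne_even k] that by blast
    qed
    then have "T p y = 0 \<or> T R y = 0" by (intro sepT[OF pA RA]) auto
    moreover have "T p y = w" using Tp y \<psi>(2) unfolding \<phi>_def by simp
    ultimately show False using TR w0 by simp
  qed
  then obtain k y' m where km: "k = 2 * of_int m" and kK: "\<bar>k\<bar> > real K" and y'V: "y' \<in> V"
    and nz: "T (phi u f0 (Bk k)) y' \<noteq> 0" by blast
  define gk where "gk = phi u f0 (Bk k)"
  have gkA: "gk \<in> cfun X" unfolding gk_def by (rule A1[OF Cls_Bk])
  have Bk_eq: "Bk k t = (if ne t = k then Dw t else 0)" for t unfolding Bk_def by simp
  have d1A: "phi u f0 (\<lambda>t. Dw t - Bk k t) \<in> cfun X" by (intro A1 Cls_diff Cls_Dw Cls_Bk)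
  have "T gk y' = 0 \<or> T (phi u f0 (\<lambda>t. Dw t - Bk k t)) y' = 0"
    unfolding gk_def
    by (intro sepT[OF _ d1A] A1[OF Cls_Bk] phi_disj[OF Bk_disj1])
  then have "T (phi u f0 (\<lambda>t. Dw t - Bk k t)) y' = 0" using nz gk_def by simp
  then have "T (\<lambda>x. g x - gk x) y' = 0" unfolding g_def gk_def phi_diff .
  then have Tgy': "T g y' = T gk y'" using T_diff_pt[OF gA gkA] by simp
  have d2A: "phi u f0 (\<lambda>t. Ew t - k * Bk k t) \<in> cfun X" by (intro A1 Cls_diff Cls_Ew Cls_scale Cls_Bk)
  have kgkA: "phi u f0 (\<lambda>t. k * Bk k t) \<in> cfun X" by (intro A1 Cls_scale Cls_Bk)
  have "T gk y' = 0 \<or> T (phi u f0 (\<lambda>t. Ew t - k * Bk k t)) y' = 0"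
    unfolding gk_def
    by (intro sepT[OF _ d2A] A1[OF Cls_Bk] phi_disj[OF Bk_disj2])
  then have "T (phi u f0 (\<lambda>t. Ew t - k * Bk k t)) y' = 0" using nz gk_def by simp
  then have "T (\<lambda>x. G x - phi u f0 (\<lambda>t. k * Bk k t) x) y' = 0" unfolding G_def phi_diff .
  then have "T G y' = T (phi u f0 (\<lambda>t. k * Bk k t)) y'" using T_diff_pt[OF GA kgkA] by simp
  also have "\<dots> = k *\<^sub>R T gk y'" unfolding phi_scale gk_def using T_scale[OF A1[OF Cls_Bk]] by metis
  finally have TGy': "T G y' = k *\<^sub>R T g y'" using Tgy' by simp
  have b1: "norm (T G y') < M" and b2: "norm (T g y') > norm w / 2" using y'V unfolding V_def by auto
  have Mpos: "M > 0" unfolding M_def by (smt (verit) norm_ge_zero)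
  have "2 * M / norm w < \<bar>k\<bar>" using K kK by linarith
  then have "M < \<bar>k\<bar> * (norm w / 2)" using nw by (simp add: field_simps)
  also have "\<dots> \<le> \<bar>k\<bar> * norm (T g y')" using b2 by (intro mult_left_mono) auto
  also have "\<dots> = norm (T G y')" using TGy' by simp
  finally show False using b1 by simp
qed

end

lemma Cls_nonneg: "Cls \<beta> \<Longrightarrow> \<exists>c\<ge>0. \<forall>t. \<bar>\<beta> t\<bar> \<le> c * (\<bar>t\<bar> + 1)"
proof -
  assume "Cls \<beta>"
  then obtain c where c: "\<forall>t. \<bar>\<beta> t\<bar> \<le> c * (\<bar>t\<bar> + 1)" unfolding Cls_def by blast
  have "\<bar>\<beta> 0\<bar> \<le> c" using c[rule_format, of 0] by simp
  moreover have "0 \<le> \<bar>\<beta> 0\<bar>" by simp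
  ultimately have "c \<ge> 0" by linarith
  then show ?thesis using c by blast
qed

lemma Cls_shift: "Cls \<beta> \<Longrightarrow> Cls (\<lambda>t. \<beta> (t + 1))"
proof -
  assume b: "Cls \<beta>"
  then obtain c where c: "c \<ge> 0" "\<forall>t. \<bar>\<beta> t\<bar> \<le> c * (\<bar>t\<bar> + 1)" using Cls_nonneg by blast
  have "continuous_on UNIV (\<lambda>t. \<beta> (t + 1))"
  proof (rule continuous_on_compose2[of UNIV \<beta> UNIV "\<lambda>t. t + 1"])
    show "continuous_on UNIV \<beta>" using b unfolding Cls_def by simp
    show "continuous_on UNIV (\<lambda>t::real. t + 1)" by (intro continuous_intros)
  qed auto
  moreover have "\<bar>\<beta> (t + 1)\<bar> \<le> (2 * c) * (\<bar>t\<bar> + 1)" for t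
  proof -
    have "\<bar>\<beta> (t + 1)\<bar> \<le> c * (\<bar>t + 1\<bar> + 1)" using c(2) by blast
    also have "\<dots> \<le> c * (2 * (\<bar>t\<bar> + 1))" using c(1) by (intro mult_left_mono) auto
    also have "\<dots> = (2 * c) * (\<bar>t\<bar> + 1)" by simp
    finally show ?thesis .
  qed
  ultimately show ?thesis unfolding Cls_def by blast
qed

context bisep
begin

lemma crux2:
  assumes y: "y \<in> topspace Y" and f0: "f0 \<in> cfun X"
   and A1: "\<And>\<beta>. Cls \<beta> \<Longrightarrow> phi u f0 \<beta> \<in> cfun X"
   and A2: "\<And>\<beta> n. Cls \<beta> \<Longrightarrow> (\<forall>t. \<bar>t\<bar> \<ge> n \<longrightarrow> \<beta> t = 0) \<Longrightarrow> T (phi u f0 \<beta>) y = 0"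
   and A3: "T f0 y \<noteq> 0"
  shows False
proof (cases "T (phi u f0 Dw) y = 0")
  case False
  show ?thesis by (rule crux[OF y f0 A1 A2 False])
next
  case True
  have s: "f0 = (\<lambda>x. phi u f0 Dw x + phi u f0 (\<lambda>t. Dw (t + 1)) x)"
    unfolding phi_def by (simp add: scaleR_add_left[symmetric] Dw_shift)
  have "T f0 y = T (phi u f0 Dw) y + T (phi u f0 (\<lambda>t. Dw (t + 1))) y"
    by (subst s, subst T_add) (auto intro: A1 Cls_Dw Cls_shift)
  then have nz: "T (phi u f0 (\<lambda>t. Dw (t + 1))) y \<noteq> 0" using True A3 by simp
  have ph: "phi (\<lambda>x. u x + 1) f0 \<beta> = phi u f0 (\<lambda>t. \<beta> (t + 1))" for \<beta>
    unfolding phi_def by simp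
  show False
  proof (rule crux[OF y f0, of "\<lambda>x. u x + 1"], unfold ph)
    show "phi u f0 (\<lambda>t. \<beta> (t + 1)) \<in> cfun X" if "Cls \<beta>" for \<beta>
      by (rule A1[OF Cls_shift[OF that]])
    show "T (phi u f0 (\<lambda>t. \<beta> (t + 1))) y = 0" if "Cls \<beta>" "\<forall>t. n \<le> \<bar>t\<bar> \<longrightarrow> \<beta> t = 0" for \<beta> n
    proof (rule A2[OF Cls_shift[OF that(1)], of "n + 1"], intro allI impI)
      fix t assume "n + 1 \<le> \<bar>t\<bar>"
      then have "n \<le> \<bar>t + 1\<bar>" by linarith
      then show "\<beta> (t + 1) = 0" using that(2) by blast
    qed
    show "T (phi u f0 (\<lambda>t. Dw (t + 1))) y \<noteq> 0" by (rule nz)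
  qed
qed

lemma pointwise:
  assumes y: "y \<in> topspace Y" and x0: "x0 \<in> topspace X"
   and supp: "\<And>U. openin X U \<Longrightarrow> x0 \<in> U \<Longrightarrow> \<not> nullset y U"
   and f0: "f0 \<in> cfun X" and f00: "f0 x0 = 0"
  shows "T f0 y = 0"
proof (rule ccontr)
  assume nz: "T f0 y \<noteq> 0"
  define u where "u = (\<lambda>x. inverse (sqrt (norm (f0 x))))"
  have cf0: "continuous_map X euclidean f0" using f0 by (simp add: cfun_def)
  have f0z: "f0 x = 0" if "x \<notin> topspace X" for x using f0 that by (simp add: cfun_def)
  have A1: "phi u f0 \<beta> \<in> cfun X" if b: "Cls \<beta>" for \<beta>
  proof -
    obtain c where c: "c \<ge> 0" "\<forall>t. \<bar>\<beta> t\<bar> \<le> c * (\<bar>t\<bar> + 1)" using Cls_nonneg[OF b] by blast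
    have "continuous_map X euclidean (phi u f0 \<beta>)"
    proof (rule GCL[OF cf0, where c=c])
      show "phi u f0 \<beta> x = 0" if "f0 x = 0" for x using that unfolding phi_def by simp
      let ?U = "{x \<in> topspace X. f0 x \<noteq> 0}"
      have cfU: "continuous_map (subtopology X ?U) euclidean f0"
        by (rule continuous_map_from_subtopology[OF cf0])
      have "continuous_map (subtopology X ?U) euclideanreal u"
        unfolding u_def
        by (intro continuous_map_real_inverse continuous_map_sqrt continuous_map_norm cfU) auto
      moreover have "continuous_map euclideanreal euclideanreal \<beta>" using b unfolding Cls_def by simp
      ultimately have "continuous_map (subtopology X ?U) euclideanreal (\<lambda>x. \<beta> (u x))"
        using continuous_map_compose[of _ euclideanreal u euclideanreal \<beta>] by (simp add: o_def)
      then show "continuous_map (subtopology X ?U) euclidean (phi u f0 \<beta>)"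
        unfolding phi_def by (intro continuous_map_scaleR' cfU)
      show "norm (phi u f0 \<beta> x) \<le> c * (sqrt (norm (f0 x)) + norm (f0 x))" for x
      proof (cases "f0 x = 0")
        case True then show ?thesis unfolding phi_def using c(1) by simp
      next
        case False
        let ?n = "norm (f0 x)"
        have np: "?n > 0" using False by simp
        have "norm (phi u f0 \<beta> x) = \<bar>\<beta> (u x)\<bar> * ?n" unfolding phi_def by simp
        also have "\<dots> \<le> c * (\<bar>u x\<bar> + 1) * ?n" using c(2) np by (intro mult_right_mono) auto
        also have "\<bar>u x\<bar> * ?n = sqrt ?n"
        proof -
          have "\<bar>u x\<bar> = inverse (sqrt ?n)" unfolding u_def by simp
          then have "\<bar>u x\<bar> * ?n = ?n / sqrt ?n" by (simp add: divide_inverse mult.commute)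
          also have "\<dots> = sqrt ?n" by (rule real_div_sqrt) simp
          finally show ?thesis .
        qed
        then have "c * (\<bar>u x\<bar> + 1) * ?n = c * (sqrt ?n + ?n)" by (simp add: algebra_simps)
        finally show ?thesis .
      qed
    qed
    then show "phi u f0 \<beta> \<in> cfun X" unfolding cfun_def phi_def using f0z by auto
  qed
  show False
  proof (rule crux2[OF y f0 A1 _ nz])
    fix \<beta> and n :: real assume b: "Cls \<beta>" and van: "\<forall>t. n \<le> \<bar>t\<bar> \<longrightarrow> \<beta> t = 0"
    define n' where "n' = max n 1"
    have n'pos: "n' > 0" unfolding n'_def by simp
    define U where "U = {x \<in> topspace X. norm (f0 x) \<in> {..<1 / n'^2}}"
    have "openin X U" unfolding U_def
      by (rule openin_continuous_map_preimage[OF continuous_map_norm[OF cf0]]) auto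
    moreover have "x0 \<in> U" unfolding U_def using x0 f00 n'pos by simp
    ultimately have "\<not> nullset y U" by (rule supp)
    then obtain h where h: "h \<in> cfun X" "\<forall>x. h x \<noteq> 0 \<longrightarrow> x \<in> U" "T h y \<noteq> 0"
      unfolding nullset_def by blast
    have pA: "phi u f0 \<beta> \<in> cfun X" by (rule A1[OF b])
    have "h x = 0" if "phi u f0 \<beta> x \<noteq> 0" for x
    proof -
      have bx: "\<beta> (u x) \<noteq> 0" and fx: "f0 x \<noteq> 0" using that unfolding phi_def by auto
      have "\<bar>u x\<bar> < n"
      proof (rule ccontr)
        assume "\<not> \<bar>u x\<bar> < n"
        then have "n \<le> \<bar>u x\<bar>" by simp
        then have "\<beta> (u x) = 0" using van by blast
        then show False using bx by contradiction
      qed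
      moreover have "\<bar>u x\<bar> = inverse (sqrt (norm (f0 x)))" unfolding u_def by simp
      moreover have "n \<le> n'" unfolding n'_def by simp
      ultimately have lt: "inverse (sqrt (norm (f0 x))) < n'" by linarith
      have np: "norm (f0 x) > 0" using fx by simp
      define s where "s = sqrt (norm (f0 x))"
      have sp: "s > 0" unfolding s_def using np by simp
      have "inverse s * s < n' * s" using lt sp unfolding s_def by (intro mult_strict_right_mono) auto
      then have gt1: "1 < n' * s" using sp by simp
      have "1 < (n' * s)^2" using one_less_power[OF gt1, of 2] by simp
      also have "\<dots> = n'^2 * norm (f0 x)" unfolding s_def using np by (simp add: power_mult_distrib)
      finally have "1 < n'^2 * norm (f0 x)" .
      then have "norm (f0 x) > 1 / n'^2" using n'pos by (simp add: divide_less_eq mult.commute)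
      then have "x \<notin> U" unfolding U_def by simp
      then show ?thesis using h(2) by blast
    qed
    then have "T (phi u f0 \<beta>) y = 0 \<or> T h y = 0" by (intro sepT[OF pA h(1)]) auto
    then show "T (phi u f0 \<beta>) y = 0" using h(3) by simp
  qed
qed

end

context bisep
begin

definition Iv :: "('a \<Rightarrow> real) \<Rightarrow> real \<Rightarrow> real \<Rightarrow> 'a set" where
  "Iv u a b = {x \<in> topspace X. a < u x \<and> u x < b}"

lemma Iv_union:
  assumes u: "continuous_map X euclideanreal u" and cb: "c < b"
    and n1: "nullset y (Iv u a b)" and n2: "nullset y (Iv u c d)"
  shows "nullset y (Iv u a d)"
  unfolding nullset_def
proof (intro ballI impI)
  fix f :: "'a \<Rightarrow> 'e" assume f: "f \<in> cfun X" and fs: "\<forall>x. f x \<noteq> 0 \<longrightarrow> x \<in> Iv u a d"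
  define lam where "lam = (\<lambda>s. min 1 (max 0 ((b - s) / (b - c))))"
  have cl: "continuous_map X euclideanreal (\<lambda>x. lam (u x))"
    unfolding lam_def using cb by (intro continuous_intros u) auto
  have cl2: "continuous_map X euclideanreal (\<lambda>x. 1 - lam (u x))"
    by (intro continuous_intros cl)
  define f1 where "f1 = (\<lambda>x. lam (u x) *\<^sub>R f x)"
  define f2 where "f2 = (\<lambda>x. (1 - lam (u x)) *\<^sub>R f x)"
  have f1A: "f1 \<in> cfun X" unfolding f1_def by (rule cfun_mult[OF cl f])
  have f2A: "f2 \<in> cfun X" unfolding f2_def by (rule cfun_mult[OF cl2 f])
  have "f = (\<lambda>x. f1 x + f2 x)" unfolding f1_def f2_def by (simp add: scaleR_add_left[symmetric])
  then have Tf: "T f y = T f1 y + T f2 y" using T_add[OF f1A f2A] by metis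
  have "T f1 y = 0" using n1 f1A unfolding nullset_def
  proof (elim ballE impE)
    show "\<forall>x. f1 x \<noteq> 0 \<longrightarrow> x \<in> Iv u a b"
    proof (intro allI impI)
      fix x assume "f1 x \<noteq> 0"
      then have "lam (u x) \<noteq> 0" "f x \<noteq> 0" unfolding f1_def by auto
      moreover have "u x < b"
      proof (rule ccontr)
        assume "\<not> u x < b"
        then have "(b - u x) / (b - c) \<le> 0" using cb by (simp add: divide_nonpos_pos)
        then have "lam (u x) = 0" unfolding lam_def by simp
        then show False using \<open>lam (u x) \<noteq> 0\<close> by simp
      qed
      ultimately show "x \<in> Iv u a b" using fs unfolding Iv_def by auto
    qed
  qed auto
  moreover have "T f2 y = 0" using n2 f2A unfolding nullset_def
  proof (elim ballE impE)
    show "\<forall>x. f2 x \<noteq> 0 \<longrightarrow> x \<in> Iv u c d"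
    proof (intro allI impI)
      fix x assume "f2 x \<noteq> 0"
      then have "lam (u x) \<noteq> 1" "f x \<noteq> 0" unfolding f2_def by auto
      moreover have "c < u x"
      proof (rule ccontr)
        assume "\<not> c < u x"
        then have "(b - u x) / (b - c) \<ge> 1" using cb by (simp add: le_divide_eq)
        then have "lam (u x) = 1" unfolding lam_def by simp
        then show False using \<open>lam (u x) \<noteq> 1\<close> by simp
      qed
      ultimately show "x \<in> Iv u c d" using fs unfolding Iv_def by auto
    qed
  qed auto
  ultimately show "T f y = 0" using Tf by simp
qed

lemma coord_support:
  assumes y: "y \<in> topspace Y" and u: "continuous_map X euclideanreal u"
    and f0: "f0 \<in> cfun X" and nz: "T f0 y \<noteq> 0"
  shows "\<exists>t. \<forall>\<delta>>0. \<not> nullset y (Iv u (t - \<delta>) (t + \<delta>))"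
proof (rule ccontr)
  assume "\<not> ?thesis"
  then have H: "\<forall>t. \<exists>\<delta>>0. nullset y (Iv u (t - \<delta>) (t + \<delta>))" by blast
  have "\<exists>n. \<not> nullset y (Iv u (-n) n)"
  proof (rule ccontr)
    assume "\<not> ?thesis"
    then have Hn: "\<And>n. nullset y (Iv u (-n) n)" by blast
    show False
    proof (rule crux2[OF y f0 _ _ nz])
      fix \<beta> assume b: "Cls \<beta>"
      have cb: "continuous_map euclideanreal euclideanreal \<beta>" using b unfolding Cls_def by simp
      have "continuous_map X euclideanreal (\<lambda>x. \<beta> (u x))"
        using continuous_map_compose[OF u cb] unfolding o_def .
      then show "phi u f0 \<beta> \<in> cfun X" unfolding phi_def by (rule cfun_mult[OF _ f0])
    next
      fix \<beta> and n :: real assume b: "Cls \<beta>" and van: "\<forall>t. n \<le> \<bar>t\<bar> \<longrightarrow> \<beta> t = 0"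
      have pA: "phi u f0 \<beta> \<in> cfun X"
      proof -
        have cb: "continuous_map euclideanreal euclideanreal \<beta>" using b unfolding Cls_def by simp
        have "continuous_map X euclideanreal (\<lambda>x. \<beta> (u x))"
          using continuous_map_compose[OF u cb] unfolding o_def .
        then show ?thesis unfolding phi_def by (rule cfun_mult[OF _ f0])
      qed
      have "\<forall>x. phi u f0 \<beta> x \<noteq> 0 \<longrightarrow> x \<in> Iv u (-n) n"
      proof (intro allI impI)
        fix x assume "phi u f0 \<beta> x \<noteq> 0"
        then have bx: "\<beta> (u x) \<noteq> 0" and fx: "f0 x \<noteq> 0" unfolding phi_def by auto
        have "\<bar>u x\<bar> < n"
        proof (rule ccontr)
          assume "\<not> \<bar>u x\<bar> < n"
          then have "n \<le> \<bar>u x\<bar>" by simp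
          then show False using van bx by blast
        qed
        moreover have "x \<in> topspace X" using cfun_nz[OF f0 fx] .
        ultimately show "x \<in> Iv u (-n) n" unfolding Iv_def by auto
      qed
      then show "T (phi u f0 \<beta>) y = 0" using Hn[of n] pA unfolding nullset_def by blast
    qed
  qed
  then obtain n where n: "\<not> nullset y (Iv u (-n) n)" by blast
  define \<Sigma> where "\<Sigma> = {s. s \<le> n + 1 \<and> nullset y (Iv u (-n) s)}"
  have e: "Iv u (-n) (-n) = {}" unfolding Iv_def by auto
  have n0: "n \<ge> 0"
  proof (rule ccontr)
    assume "\<not> n \<ge> 0"
    then have "Iv u (-n) n = {}" unfolding Iv_def by auto
    then show False using n nullset_empty by simp
  qed
  have m\<Sigma>: "-n \<in> \<Sigma>" unfolding \<Sigma>_def using e nullset_empty n0 by simp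
  then have ne: "\<Sigma> \<noteq> {}" by blast
  have bdd: "bdd_above \<Sigma>" unfolding \<Sigma>_def bdd_above_def by auto
  define \<sigma> where "\<sigma> = Sup \<Sigma>"
  have "\<not> \<sigma> \<le> n"
  proof
    assume sn: "\<sigma> \<le> n"
    obtain \<delta>0 where d0: "\<delta>0 > 0" "nullset y (Iv u (\<sigma> - \<delta>0) (\<sigma> + \<delta>0))" using H by blast
    define \<delta> where "\<delta> = min \<delta>0 1"
    have d: "\<delta> > 0" "\<delta> \<le> 1" "\<delta> \<le> \<delta>0" using d0 unfolding \<delta>_def by auto
    have nd: "nullset y (Iv u (\<sigma> - \<delta>) (\<sigma> + \<delta>))"
      by (rule nullset_mono[OF d0(2)]) (use d in \<open>auto simp: Iv_def\<close>)
    have "\<sigma> - \<delta> < \<sigma>" using d by simp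
    then obtain s where s: "s \<in> \<Sigma>" "\<sigma> - \<delta> < s" using less_cSup_iff[OF ne bdd] \<sigma>_def by blast
    have "nullset y (Iv u (-n) (\<sigma> + \<delta>))"
      by (rule Iv_union[OF u _ _ nd]) (use s in \<open>auto simp: \<Sigma>_def\<close>)
    moreover have "\<sigma> + \<delta> \<le> n + 1" using sn d by simp
    ultimately have "\<sigma> + \<delta> \<in> \<Sigma>" unfolding \<Sigma>_def by simp
    then have "\<sigma> + \<delta> \<le> \<sigma>" unfolding \<sigma>_def by (rule cSup_upper[OF _ bdd])
    then show False using d by simp
  qed
  then have "n < \<sigma>" by simp
  then obtain s where s: "s \<in> \<Sigma>" "n < s" using less_cSup_iff[OF ne bdd] \<sigma>_def by blast
  then have "nullset y (Iv u (-n) s)" unfolding \<Sigma>_def by simp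
  then have "nullset y (Iv u (-n) n)" by (rule nullset_mono) (use s in \<open>auto simp: Iv_def\<close>)
  then show False using n by simp
qed

end

context bisep
begin

lemma Iv_ball: "Iv u (t - \<delta>) (t + \<delta>) = {x \<in> topspace X. \<bar>u x - t\<bar> < \<delta>}"
  unfolding Iv_def by auto

lemma box_nonnull:
  assumes y: "y \<in> topspace Y" and f0: "f0 \<in> cfun X" and nz: "T f0 y \<noteq> 0"
    and cont: "\<And>i. i \<in> J \<Longrightarrow> continuous_map X euclideanreal (\<pi> i)"
    and supp: "\<And>i \<delta>. i \<in> J \<Longrightarrow> \<delta> > 0 \<Longrightarrow> \<not> nullset y {x \<in> topspace X. \<bar>\<pi> i x - tt i\<bar> < \<delta>}"
    and fin: "finite J"
  shows "\<delta> > 0 \<Longrightarrow> \<not> nullset y {x \<in> topspace X. \<forall>i\<in>J. \<bar>\<pi> i x - tt i\<bar> < \<delta>}"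
  using fin cont supp
proof (induction J arbitrary: \<delta> rule: finite_induct)
  case empty
  then show ?case using f0 nz cfun_nz[OF f0] unfolding nullset_def by auto
next
  case (insert i J)
  have dpos: "\<delta> > 0" by fact
  have IH: "\<not> nullset y {x \<in> topspace X. \<forall>j\<in>J. \<bar>\<pi> j x - tt j\<bar> < \<delta>}"
    using insert.IH[OF dpos] insert.prems by auto
  then obtain f where f: "f \<in> cfun X" "\<forall>x. f x \<noteq> 0 \<longrightarrow> x \<in> {x \<in> topspace X. \<forall>j\<in>J. \<bar>\<pi> j x - tt j\<bar> < \<delta>}"
    "T f y \<noteq> 0" unfolding nullset_def by blast
  have ci: "continuous_map X euclideanreal (\<pi> i)" using insert.prems by auto
  have "\<delta>/2 > 0" using dpos by simp
  have sup: "\<And>j d. j \<in> insert i J \<Longrightarrow> d > 0 \<Longrightarrow> \<not> nullset y {x \<in> topspace X. \<bar>\<pi> j x - tt j\<bar> < d}"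
    using insert.prems by blast
  have "\<not> nullset y {x \<in> topspace X. \<bar>\<pi> i x - tt i\<bar> < \<delta>/2}" by (rule sup[OF insertI1 \<open>\<delta>/2 > 0\<close>])
  then obtain g where g: "g \<in> cfun X" "\<forall>x. g x \<noteq> 0 \<longrightarrow> x \<in> {x \<in> topspace X. \<bar>\<pi> i x - tt i\<bar> < \<delta>/2}"
    "T g y \<noteq> 0" unfolding nullset_def by blast
  show ?case
  proof
    assume N: "nullset y {x \<in> topspace X. \<forall>j\<in>insert i J. \<bar>\<pi> j x - tt j\<bar> < \<delta>}"
    define lam where "lam = (\<lambda>s. min 1 (max 0 (2 - 2 * \<bar>s - tt i\<bar> / \<delta>)))"
    have cl: "continuous_map X euclideanreal (\<lambda>x. lam (\<pi> i x))"
      unfolding lam_def using dpos by (intro continuous_intros ci) auto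
    have cl2: "continuous_map X euclideanreal (\<lambda>x. 1 - lam (\<pi> i x))"
      by (intro continuous_intros cl)
    define f1 where "f1 = (\<lambda>x. lam (\<pi> i x) *\<^sub>R f x)"
    define f2 where "f2 = (\<lambda>x. (1 - lam (\<pi> i x)) *\<^sub>R f x)"
    have f1A: "f1 \<in> cfun X" unfolding f1_def by (rule cfun_mult[OF cl f(1)])
    have f2A: "f2 \<in> cfun X" unfolding f2_def by (rule cfun_mult[OF cl2 f(1)])
    have "f = (\<lambda>x. f1 x + f2 x)" unfolding f1_def f2_def by (simp add: scaleR_add_left[symmetric])
    then have Tf: "T f y = T f1 y + T f2 y" using T_add[OF f1A f2A] by metis
    have "T f1 y = 0"
    proof -
      have "\<forall>x. f1 x \<noteq> 0 \<longrightarrow> x \<in> {x \<in> topspace X. \<forall>j\<in>insert i J. \<bar>\<pi> j x - tt j\<bar> < \<delta>}"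
      proof (intro allI impI)
        fix x assume "f1 x \<noteq> 0"
        then have l: "lam (\<pi> i x) \<noteq> 0" and fx: "f x \<noteq> 0" unfolding f1_def by auto
        have "\<bar>\<pi> i x - tt i\<bar> < \<delta>"
        proof (rule ccontr)
          assume "\<not> \<bar>\<pi> i x - tt i\<bar> < \<delta>"
          then have "2 * \<bar>\<pi> i x - tt i\<bar> / \<delta> \<ge> 2" using dpos by (simp add: le_divide_eq)
          then have "lam (\<pi> i x) = 0" unfolding lam_def by simp
          then show False using l by simp
        qed
        then show "x \<in> {x \<in> topspace X. \<forall>j\<in>insert i J. \<bar>\<pi> j x - tt j\<bar> < \<delta>}" using f(2) fx by auto
      qed
      then show ?thesis using N f1A unfolding nullset_def by blast
    qed
    then have T2: "T f2 y \<noteq> 0" using Tf f(3) by simp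
    have "T f2 y = 0 \<or> T g y = 0"
    proof (rule sepT[OF f2A g(1)])
      fix x assume "f2 x \<noteq> 0"
      then have l: "lam (\<pi> i x) \<noteq> 1" unfolding f2_def by auto
      have "\<not> \<bar>\<pi> i x - tt i\<bar> < \<delta>/2"
      proof
        assume "\<bar>\<pi> i x - tt i\<bar> < \<delta>/2"
        then have "2 * \<bar>\<pi> i x - tt i\<bar> / \<delta> < 1" using dpos by (simp add: divide_less_eq)
        then have "lam (\<pi> i x) = 1" unfolding lam_def by simp
        then show False using l by simp
      qed
      then show "g x = 0" using g(2) by blast
    qed
    then show False using T2 g(3) by simp
  qed
qed

end

context bisep
begin

lemma support_exists:
  assumes y: "y \<in> topspace Y" and f0: "f0 \<in> cfun X" and nz: "T f0 y \<noteq> 0"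
  shows "\<exists>x0\<in>topspace X. \<forall>U. openin X U \<longrightarrow> x0 \<in> U \<longrightarrow> \<not> nullset y U"
proof -
  obtain I :: "('a \<Rightarrow> real) set" and Sset
    where cl: "closedin (product_topology (\<lambda>_. euclideanreal) I) Sset"
      and hs: "X homeomorphic_space subtopology (product_topology (\<lambda>_. euclideanreal) I) Sset"
    using rcX unfolding realcompact_space_def by blast
  define PT where "PT = product_topology (\<lambda>_::'a\<Rightarrow>real. euclideanreal) I"
  from hs obtain \<phi> \<psi> where hm: "homeomorphic_maps X (subtopology PT Sset) \<phi> \<psi>"
    unfolding homeomorphic_space_def PT_def by blast
  have c\<phi>: "continuous_map X (subtopology PT Sset) \<phi>"
    and c\<psi>: "continuous_map (subtopology PT Sset) X \<psi>"
    and \<psi>\<phi>: "\<And>x. x \<in> topspace X \<Longrightarrow> \<psi> (\<phi> x) = x"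
    and \<phi>\<psi>: "\<And>z. z \<in> topspace (subtopology PT Sset) \<Longrightarrow> \<phi> (\<psi> z) = z"
    using hm unfolding homeomorphic_maps_def by auto
  have c\<phi>': "continuous_map X PT \<phi>" and \<phi>S: "\<And>x. x \<in> topspace X \<Longrightarrow> \<phi> x \<in> Sset"
    using c\<phi> unfolding continuous_map_in_subtopology by auto
  have \<phi>top: "\<phi> x \<in> topspace PT" if "x \<in> topspace X" for x
    using c\<phi>' that unfolding continuous_map_def by auto
  define \<pi> where "\<pi> = (\<lambda>i x. \<phi> x i)"
  have c\<pi>: "continuous_map X euclideanreal (\<pi> i)" if "i \<in> I" for i
  proof -
    have "continuous_map PT euclideanreal (\<lambda>z. z i)"
      unfolding PT_def using continuous_map_product_projection[OF that, of "\<lambda>_. euclideanreal"] by simp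
    then show ?thesis using continuous_map_compose[OF c\<phi>'] unfolding \<pi>_def o_def by blast
  qed
  have "\<forall>i\<in>I. \<exists>t. \<forall>\<delta>>0. \<not> nullset y {x \<in> topspace X. \<bar>\<pi> i x - t\<bar> < \<delta>}"
    using coord_support[OF y c\<pi> f0 nz] unfolding Iv_ball by blast
  then obtain tt where tt: "\<And>i \<delta>. i \<in> I \<Longrightarrow> \<delta> > 0 \<Longrightarrow> \<not> nullset y {x \<in> topspace X. \<bar>\<pi> i x - tt i\<bar> < \<delta>}"
    by metis
  define p where "p = (\<lambda>i. if i \<in> I then tt i else undefined)"
  have KB: "\<not> nullset y {x \<in> topspace X. \<phi> x \<in> PiE I U'}"
    if fU: "finite {i \<in> I. U' i \<noteq> topspace euclideanreal}" and oU: "\<forall>i\<in>I. openin euclideanreal (U' i)"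
      and pU: "p \<in> PiE I U'" for U'
  proof -
    define J where "J = {i \<in> I. U' i \<noteq> topspace euclideanreal}"
    have finJ: "finite J" using fU J_def by simp
    have JI: "J \<subseteq> I" unfolding J_def by auto
    have "\<exists>d>0. ball (tt i) d \<subseteq> U' i" if "i \<in> J" for i
    proof -
      have "tt i \<in> U' i" using pU that JI unfolding p_def by (auto simp: PiE_iff)
      moreover have "open (U' i)" using oU that JI by auto
      ultimately show ?thesis using open_contains_ball by blast
    qed
    then obtain dd where dd: "\<And>i. i \<in> J \<Longrightarrow> dd i > 0" "\<And>i. i \<in> J \<Longrightarrow> ball (tt i) (dd i) \<subseteq> U' i"
      by metis
    define \<delta> where "\<delta> = Min (insert 1 (dd ` J))"
    have \<delta>pos: "\<delta> > 0" unfolding \<delta>_def using finJ dd(1) by (simp add: Min_gr_iff)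
    have \<delta>le: "\<delta> \<le> dd i" if "i \<in> J" for i unfolding \<delta>_def using finJ that by simp
    have "\<not> nullset y {x \<in> topspace X. \<forall>i\<in>J. \<bar>\<pi> i x - tt i\<bar> < \<delta>}"
      by (rule box_nonnull[OF y f0 nz _ _ finJ \<delta>pos]) (use JI c\<pi> tt in auto)
    moreover have "{x \<in> topspace X. \<forall>i\<in>J. \<bar>\<pi> i x - tt i\<bar> < \<delta>} \<subseteq> {x \<in> topspace X. \<phi> x \<in> PiE I U'}"
    proof
      fix x assume xx: "x \<in> {x \<in> topspace X. \<forall>i\<in>J. \<bar>\<pi> i x - tt i\<bar> < \<delta>}"
      then have x: "x \<in> topspace X" and b: "\<forall>i\<in>J. \<bar>\<pi> i x - tt i\<bar> < \<delta>" by auto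
      have ext: "\<phi> x \<in> extensional I" using \<phi>top[OF x] unfolding PT_def by (simp add: PiE_iff)
      have "\<phi> x i \<in> U' i" if "i \<in> I" for i
      proof (cases "i \<in> J")
        case True
        then have "\<bar>\<phi> x i - tt i\<bar> < dd i" using b \<delta>le[OF True] unfolding \<pi>_def by force
        then have "\<phi> x i \<in> ball (tt i) (dd i)" by (simp add: dist_real_def abs_minus_commute)
        then show ?thesis using dd(2)[OF True] by blast
      next
        case False
        then show ?thesis using that unfolding J_def by auto
      qed
      then show "x \<in> {x \<in> topspace X. \<phi> x \<in> PiE I U'}" using ext x by (simp add: PiE_iff)
    qed
    ultimately show ?thesis using nullset_mono by blast
  qed
  have pT: "p \<in> topspace PT" unfolding PT_def p_def by (simp add: PiE_iff extensional_def)
  have pS: "p \<in> Sset"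
  proof (rule ccontr)
    assume pnS: "p \<notin> Sset"
    have "openin PT (topspace PT - Sset)" using cl unfolding PT_def closedin_def by blast
    then obtain U' where U': "finite {i \<in> I. U' i \<noteq> topspace euclideanreal}"
      "\<forall>i\<in>I. openin euclideanreal (U' i)" "p \<in> PiE I U'" "PiE I U' \<subseteq> topspace PT - Sset"
      using pT pnS unfolding openin_product_topology_alt PT_def by blast
    have "\<not> nullset y {x \<in> topspace X. \<phi> x \<in> PiE I U'}" by (rule KB[OF U'(1-3)])
    then have "{x \<in> topspace X. \<phi> x \<in> PiE I U'} \<noteq> {}" using nullset_empty by metis
    then obtain x where x: "x \<in> topspace X" "\<phi> x \<in> PiE I U'" by blast
    then show False using U'(4) \<phi>S[OF x(1)] by blast
  qed
  define x0 where "x0 = \<psi> p"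
  have pTS: "p \<in> topspace (subtopology PT Sset)" using pT pS by simp
  have x0X: "x0 \<in> topspace X" unfolding x0_def using c\<psi> pTS unfolding continuous_map_def by auto
  have \<phi>x0: "\<phi> x0 = p" unfolding x0_def by (rule \<phi>\<psi>[OF pTS])
  have hmap: "homeomorphic_map X (subtopology PT Sset) \<phi>" using hm homeomorphic_map_maps by blast
  show ?thesis
  proof (intro bexI[OF _ x0X] allI impI)
    fix U assume U: "openin X U" "x0 \<in> U"
    have "openin (subtopology PT Sset) (\<phi> ` U)"
      using homeomorphic_map_openness[OF hmap openin_subset[OF U(1)]] U(1) by simp
    then obtain W where W: "openin PT W" "\<phi> ` U = W \<inter> Sset" unfolding openin_subtopology by blast
    have pW: "p \<in> W" using \<phi>x0 U(2) W(2) by blast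
    then obtain U' where U': "finite {i \<in> I. U' i \<noteq> topspace euclideanreal}"
      "\<forall>i\<in>I. openin euclideanreal (U' i)" "p \<in> PiE I U'" "PiE I U' \<subseteq> W"
      using W(1) unfolding openin_product_topology_alt PT_def by blast
    have "{x \<in> topspace X. \<phi> x \<in> PiE I U'} \<subseteq> U"
    proof
      fix x assume x: "x \<in> {x \<in> topspace X. \<phi> x \<in> PiE I U'}"
      then have "\<phi> x \<in> W \<inter> Sset" using U'(4) \<phi>S by auto
      then obtain x' where x': "x' \<in> U" "\<phi> x' = \<phi> x" using W(2) by (metis imageE)
      have "x' \<in> topspace X" using x'(1) openin_subset[OF U(1)] by blast
      then have "x = x'" using \<psi>\<phi> x x'(2) by (metis (no_types, lifting) mem_Collect_eq)
      then show "x \<in> U" using x'(1) by simp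
    qed
    then show "\<not> nullset y U" using KB[OF U'(1-3)] nullset_mono by blast
  qed
qed

end

lemma fd_basis:
  assumes "\<exists>B::'e::real_normed_vector set. finite B \<and> span B = UNIV"
  shows "\<exists>B::'e set. finite B \<and> (\<exists>M. \<forall>v. (\<Sum>b\<in>B. representation B v b *\<^sub>R b) = v \<and>
            (\<forall>b\<in>B. \<bar>representation B v b\<bar> \<le> M * norm v))"
proof -
  obtain B0 :: "'e set" where B0: "finite B0" "span B0 = UNIV" using assms by blast
  obtain B where B: "B \<subseteq> B0" "independent B" "B0 \<subseteq> span B"
    using maximal_independent_subset[of B0] by blast
  have finB: "finite B" using B(1) B0(1) finite_subset by blast
  have spB: "v \<in> span B" for v
  proof -
    have "span B0 \<subseteq> span B" using B(3) by (simp add: span_minimal)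
    then show ?thesis using B0(2) by auto
  qed
  obtain M where M: "\<forall>a. \<forall>b\<in>B. \<bar>a b\<bar> \<le> M * norm (\<Sum>c\<in>B. a c *\<^sub>R c)"
    using fd_coord_bound[OF finB B(2)] by blast
  have rep: "(\<Sum>b\<in>B. representation B v b *\<^sub>R b) = v" for v
    by (rule real_vector.sum_representation_eq[OF B(2) spB finB order_refl])
  show ?thesis
  proof (intro exI conjI allI ballI)
    show "finite B" by (rule finB)
    fix v show "(\<Sum>b\<in>B. representation B v b *\<^sub>R b) = v" by (rule rep)
    fix b assume "b \<in> B"
    then have "\<bar>representation B v b\<bar> \<le> M * norm (\<Sum>c\<in>B. representation B v c *\<^sub>R c)"
      using M by blast
    then show "\<bar>representation B v b\<bar> \<le> M * norm v" using rep[of v] by simp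
  qed
qed

context bisep
begin

definition hmap :: "'b \<Rightarrow> 'a" where
  "hmap y = (SOME x0. x0 \<in> topspace X \<and> (\<forall>U. openin X U \<longrightarrow> x0 \<in> U \<longrightarrow> \<not> nullset y U))"

definition Jy :: "'b \<Rightarrow> 'e \<Rightarrow> 'f" where
  "Jy y v = T (constf X v) y"

lemma nonnull:
  assumes w: "(w::'f) \<noteq> 0" and y: "y \<in> topspace Y"
  shows "\<exists>f0\<in>cfun X. T f0 y \<noteq> 0"
proof -
  have c: "constf Y w \<in> cfun Y" by (rule cfun_const)
  have "T (S (constf Y w)) y = w" using TS[OF c] y by (simp add: constf_def)
  then show ?thesis using S_in[OF c] w by metis
qed

lemma h_prop:
  assumes w: "(w::'f) \<noteq> 0" and y: "y \<in> topspace Y"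
  shows "hmap y \<in> topspace X" "\<And>U. openin X U \<Longrightarrow> hmap y \<in> U \<Longrightarrow> \<not> nullset y U"
proof -
  obtain f0 where "f0 \<in> cfun X" "T f0 y \<noteq> 0" using nonnull[OF w y] by blast
  then have "\<exists>x0. x0 \<in> topspace X \<and> (\<forall>U. openin X U \<longrightarrow> x0 \<in> U \<longrightarrow> \<not> nullset y U)"
    using support_exists[OF y] by blast
  then have "hmap y \<in> topspace X \<and> (\<forall>U. openin X U \<longrightarrow> hmap y \<in> U \<longrightarrow> \<not> nullset y U)"
    unfolding hmap_def by (rule someI_ex)
  then show "hmap y \<in> topspace X" "\<And>U. openin X U \<Longrightarrow> hmap y \<in> U \<Longrightarrow> \<not> nullset y U" by auto
qed

lemma T_pt:
  assumes y: "y \<in> topspace Y" and f: "f \<in> cfun X" and f0: "f (hmap y) = 0"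
  shows "T f y = 0"
proof (cases "\<exists>w::'f. w \<noteq> 0")
  case True
  then obtain w :: 'f where w: "w \<noteq> 0" by blast
  show ?thesis by (rule pointwise[OF y h_prop(1)[OF w y] h_prop(2)[OF w y] f f0])
next
  case False
  then have "\<forall>w::'f. w = 0" by simp
  then show ?thesis by simp
qed

lemma T_eval:
  assumes y: "y \<in> topspace Y" and f: "f \<in> cfun X"
  shows "T f y = Jy y (f (hmap y))"
proof (cases "\<exists>w::'f. w \<noteq> 0")
  case True
  then obtain w :: 'f where w: "w \<noteq> 0" by blast
  have hX: "hmap y \<in> topspace X" by (rule h_prop(1)[OF w y])
  have c: "constf X (f (hmap y)) \<in> cfun X" by (rule cfun_const)
  have "T (\<lambda>x. f x - constf X (f (hmap y)) x) y = 0"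
    by (rule T_pt[OF y cfun_diff[OF f c]]) (simp add: constf_def hX)
  then show ?thesis unfolding Jy_def using T_diff_pt[OF f c] by simp
next
  case False
  then have z: "\<forall>w::'f. w = 0" by simp
  show ?thesis using spec[OF z, of "T f y"] spec[OF z, of "Jy y (f (hmap y))"] by simp
qed

lemma Jy_add: "Jy y (v1 + v2) = Jy y v1 + Jy y v2"
proof -
  have "constf X (v1 + v2) = (\<lambda>x. constf X v1 x + constf X v2 x)" by (auto simp: constf_def)
  then show ?thesis unfolding Jy_def by (simp only: T_add[OF cfun_const cfun_const])
qed

lemma Jy_scale: "Jy y (c *\<^sub>R v) = c *\<^sub>R Jy y v"
proof -
  have "constf X (c *\<^sub>R v) = (\<lambda>x. c *\<^sub>R constf X v x)" by (auto simp: constf_def)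
  then show ?thesis unfolding Jy_def by (simp only: T_scale[OF cfun_const])
qed

lemma Jy_zero: "Jy y 0 = 0"
  using Jy_scale[of y 0 0] by simp

lemma Jy_sum: "finite B \<Longrightarrow> Jy y (\<Sum>b\<in>B. c b *\<^sub>R b) = (\<Sum>b\<in>B. c b *\<^sub>R Jy y b)"
  by (induction B rule: finite_induct) (simp_all add: Jy_zero Jy_add Jy_scale)

lemma h_cont:
  assumes w: "(w::'f) \<noteq> 0"
  shows "continuous_map Y X hmap"
  unfolding continuous_map_def
proof (intro conjI allI impI)
  show "hmap \<in> topspace Y \<rightarrow> topspace X" using h_prop(1)[OF w] by blast
  fix U assume U: "openin X U"
  show "openin Y {y \<in> topspace Y. hmap y \<in> U}"
  proof (subst openin_subopen, intro ballI)
    fix y0 assume y0: "y0 \<in> {y \<in> topspace Y. hmap y \<in> U}"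
    then have "\<not> nullset y0 U" using h_prop(2)[OF w] U by blast
    then obtain f where f: "f \<in> cfun X" "\<forall>x. f x \<noteq> 0 \<longrightarrow> x \<in> U" "T f y0 \<noteq> 0"
      unfolding nullset_def by blast
    have cTf: "continuous_map Y euclidean (T f)" using T_in[OF f(1)] by (simp add: cfun_def)
    define V where "V = {y \<in> topspace Y. T f y \<in> -{0}}"
    have "openin Y V" unfolding V_def by (rule openin_continuous_map_preimage[OF cTf]) auto
    moreover have "y0 \<in> V" using y0 f(3) unfolding V_def by auto
    moreover have "V \<subseteq> {y \<in> topspace Y. hmap y \<in> U}"
    proof
      fix y assume yV: "y \<in> V"
      then have yY: "y \<in> topspace Y" and nz: "T f y \<noteq> 0" unfolding V_def by auto
      have "hmap y \<in> U"
      proof (rule ccontr)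
        assume "hmap y \<notin> U"
        then have "f (hmap y) = 0" using f(2) by blast
        then show False using T_pt[OF yY f(1)] nz by simp
      qed
      then show "y \<in> {y \<in> topspace Y. hmap y \<in> U}" using yY by simp
    qed
    ultimately show "\<exists>T. openin Y T \<and> y0 \<in> T \<and> T \<subseteq> {y \<in> topspace Y. hmap y \<in> U}" by blast
  qed
qed

lemma bound:
  assumes L: "compactin Y L"
  shows "\<exists>K C. compactin X K \<and> C \<ge> 0 \<and>
     (\<forall>f\<in>cfun X. \<forall>r. (\<forall>x\<in>K. norm (f x) \<le> r) \<longrightarrow> (\<forall>y\<in>L. norm (T f y) \<le> C * r))"
proof (cases "\<exists>w::'f. w \<noteq> 0")
  case False
  then show ?thesis by (intro exI[of _ "{}"] exI[of _ 0]) auto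
next
  case True
  then obtain w :: 'f where w: "w \<noteq> 0" by blast
  obtain B :: "'e set" and M where B: "finite B"
    and rep: "\<And>v. (\<Sum>b\<in>B. representation B v b *\<^sub>R b) = v"
    and M: "\<And>v b. b \<in> B \<Longrightarrow> \<bar>representation B v b\<bar> \<le> M * norm v"
    using fd_basis[OF fdE] by blast
  define K where "K = hmap ` L"
  have K: "compactin X K" unfolding K_def by (rule image_compactin[OF L h_cont[OF w]])
  define g where "g = (\<lambda>y. \<Sum>b\<in>B. norm (Jy y b))"
  have cg: "continuous_map Y euclideanreal g"
    unfolding g_def Jy_def
  proof (intro continuous_map_sum B continuous_map_norm)
    fix b show "continuous_map Y euclidean (T (constf X b))" using T_in[OF cfun_const] by (simp add: cfun_def)
  qed
  have "compact (g ` L)" using image_compactin[OF L cg] by simp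
  then have "bounded (g ` L)" by (rule compact_imp_bounded)
  then obtain A where A: "\<And>z. z \<in> g ` L \<Longrightarrow> norm z \<le> A" unfolding bounded_iff by blast
  show ?thesis
  proof (intro exI conjI ballI allI impI)
    show "compactin X K" by (rule K)
    show "\<bar>M\<bar> * \<bar>A\<bar> \<ge> 0" by simp
    fix f :: "'a \<Rightarrow> 'e" and r y assume f: "f \<in> cfun X" and fr: "\<forall>x\<in>K. norm (f x) \<le> r" and yL: "y \<in> L"
    have yY: "y \<in> topspace Y" using L yL compactin_subset_topspace by blast
    let ?v = "f (hmap y)"
    have vr: "norm ?v \<le> r" using fr yL unfolding K_def by blast
    have "T f y = Jy y (\<Sum>b\<in>B. representation B ?v b *\<^sub>R b)" using T_eval[OF yY f] rep by simp
    also have "\<dots> = (\<Sum>b\<in>B. representation B ?v b *\<^sub>R Jy y b)" by (rule Jy_sum[OF B])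
    finally have eq: "T f y = (\<Sum>b\<in>B. representation B ?v b *\<^sub>R Jy y b)" .
    have "norm (T f y) \<le> (\<Sum>b\<in>B. norm (representation B ?v b *\<^sub>R Jy y b))"
      unfolding eq by (rule norm_sum)
    also have "\<dots> \<le> (\<Sum>b\<in>B. (\<bar>M\<bar> * r) * norm (Jy y b))"
    proof (rule sum_mono)
      fix b assume b: "b \<in> B"
      have "\<bar>representation B ?v b\<bar> \<le> \<bar>M\<bar> * r"
      proof -
        have "\<bar>representation B ?v b\<bar> \<le> M * norm ?v" by (rule M[OF b])
        also have "\<dots> \<le> \<bar>M\<bar> * norm ?v" by (simp add: mult_right_mono)
        also have "\<dots> \<le> \<bar>M\<bar> * r" using vr by (simp add: mult_left_mono)
        finally show ?thesis .
      qed
      then show "norm (representation B ?v b *\<^sub>R Jy y b) \<le> (\<bar>M\<bar> * r) * norm (Jy y b)"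
        by (simp add: mult_right_mono)
    qed
    also have "\<dots> = (\<bar>M\<bar> * r) * g y" unfolding g_def by (simp add: sum_distrib_left)
    also have "\<dots> \<le> (\<bar>M\<bar> * r) * \<bar>A\<bar>"
    proof (rule mult_left_mono)
      have "norm (g y) \<le> A" using A yL by blast
      then show "g y \<le> \<bar>A\<bar>" by simp
      have "0 \<le> norm ?v" by simp
      then have "0 \<le> r" using vr by linarith
      then show "0 \<le> \<bar>M\<bar> * r" by simp
    qed
    finally show "norm (T f y) \<le> \<bar>M\<bar> * \<bar>A\<bar> * r" by (simp add: mult_ac)
  qed
qed

end

lemma topspace_CO: "topspace (compact_open_topology X) = (cfun X :: ('a \<Rightarrow> 'e::real_normed_vector) set)"
proof -
  define G where "G = {{g \<in> (cfun X :: ('a \<Rightarrow> 'e) set). g ` K \<subseteq> U} | K U. compactin X K \<and> open U}"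
  have co: "compact_open_topology X = topology_generated_by G" unfolding G_def compact_open_topology_def by simp
  have "\<Union>G \<subseteq> cfun X" unfolding G_def by auto
  moreover have "cfun X \<subseteq> \<Union>G"
  proof
    fix f :: "'a \<Rightarrow> 'e" assume "f \<in> cfun X"
    then have fm: "f \<in> {g \<in> (cfun X :: ('a \<Rightarrow> 'e) set). g ` {} \<subseteq> UNIV}" by simp
    have m: "{g \<in> (cfun X :: ('a \<Rightarrow> 'e) set). g ` {} \<subseteq> UNIV} \<in> G" unfolding G_def by blast
    show "f \<in> \<Union>G" by (rule UnionI[OF m fm])
  qed
  ultimately show ?thesis unfolding co by simp
qed

lemma CO_basic:
  assumes "compactin X K" "open U"
  shows "openin (compact_open_topology X) {f \<in> cfun X. f ` K \<subseteq> (U :: 'e::real_normed_vector set)}"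
  unfolding compact_open_topology_def
  by (rule topology_generated_by_Basis) (use assms in blast)

lemma uo_nbhd:
  fixes f1 :: "'a \<Rightarrow> 'e::real_normed_vector"
  assumes f1: "f1 \<in> cfun X" and K: "compactin X K" and d: "\<delta> > 0"
  shows "\<exists>N. openin (compact_open_topology X) N \<and> f1 \<in> N \<and>
            (\<forall>f\<in>N. f \<in> cfun X \<and> (\<forall>x\<in>K. norm (f x - f1 x) \<le> \<delta>))"
proof -
  have cf1: "continuous_map X euclidean f1" using f1 by (simp add: cfun_def)
  have KX: "K \<subseteq> topspace X" using K compactin_subset_topspace by blast
  define Ob where "Ob = (\<lambda>x. {z \<in> topspace X. f1 z \<in> ball (f1 x) (\<delta>/3)})"
  have Oo: "openin X (Ob x)" for x unfolding Ob_def by (rule openin_continuous_map_preimage[OF cf1]) auto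
  have "K \<subseteq> \<Union>(Ob ` K)" using KX d unfolding Ob_def by auto
  moreover have cK: "\<forall>\<U>. (\<forall>U\<in>\<U>. openin X U) \<and> K \<subseteq> \<Union>\<U> \<longrightarrow> (\<exists>F. finite F \<and> F \<subseteq> \<U> \<and> K \<subseteq> \<Union>F)"
    using K unfolding compactin_def by blast
  moreover have "\<forall>U\<in>Ob ` K. openin X U" using Oo by blast
  ultimately obtain F where F: "finite F" "F \<subseteq> Ob ` K" "K \<subseteq> \<Union>F"
    using spec[OF cK, of "Ob ` K"] by blast
  obtain Fn where Fn: "Fn \<subseteq> K" "finite Fn" "F = Ob ` Fn" using finite_subset_image[OF F(1) F(2)] by blast
  define Kx where "Kx = (\<lambda>x. {z \<in> topspace X. f1 z \<in> cball (f1 x) (\<delta>/3)} \<inter> K)"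
  have Kxc: "compactin X (Kx x)" for x
    unfolding Kx_def
    by (rule closed_Int_compactin[OF closedin_continuous_map_preimage[OF cf1] K]) auto
  define N where "N = (\<Inter>x\<in>Fn. {f \<in> cfun X. f ` Kx x \<subseteq> ball (f1 x) (\<delta>/2)}) \<inter> topspace (compact_open_topology X)"
  have "openin (compact_open_topology X) N"
    unfolding N_def by (intro openin_INT Fn(2) CO_basic Kxc) auto
  moreover have "f1 \<in> N"
  proof -
    have "f1 ` Kx x \<subseteq> ball (f1 x) (\<delta>/2)" for x
    proof
      fix v assume "v \<in> f1 ` Kx x"
      then have "dist (f1 x) v \<le> \<delta>/3" unfolding Kx_def by auto
      then show "v \<in> ball (f1 x) (\<delta>/2)" using d by simp
    qed
    then show ?thesis unfolding N_def topspace_CO using f1 by blast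
  qed
  moreover have "\<forall>x\<in>K. norm (f x - f1 x) \<le> \<delta>" if fN: "f \<in> N" for f
  proof
    fix x' assume x': "x' \<in> K"
    then obtain x where x: "x \<in> Fn" "x' \<in> Ob x" using F Fn by blast
    have "x' \<in> Kx x" using x(2) x' unfolding Ob_def Kx_def by auto
    then have "f x' \<in> ball (f1 x) (\<delta>/2)" using fN x(1) unfolding N_def by blast
    moreover have "f1 x' \<in> ball (f1 x) (\<delta>/3)" using x(2) unfolding Ob_def by auto
    ultimately have a: "dist (f1 x) (f x') < \<delta>/2" and b: "dist (f1 x) (f1 x') < \<delta>/3" by auto
    have "dist (f x') (f1 x') \<le> dist (f x') (f1 x) + dist (f1 x) (f1 x')" by (rule dist_triangle)
    then have "dist (f x') (f1 x') < \<delta>/2 + \<delta>/3" using a b by (simp add: dist_commute)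
    then show "norm (f x' - f1 x') \<le> \<delta>" using d by (simp add: dist_norm)
  qed
  moreover have "N \<subseteq> cfun X" unfolding N_def topspace_CO by blast
  ultimately show ?thesis by blast
qed

context bisep
begin

lemma T_cont: "continuous_map (compact_open_topology X) (compact_open_topology Y) T"
  unfolding compact_open_topology_def[of Y]
proof (rule continuous_on_generated_topo)
  have tX: "topspace (compact_open_topology X) = cfun X" by (rule topspace_CO)
  have tY: "\<Union>{{f \<in> cfun Y. f ` K \<subseteq> U} | K U. compactin Y K \<and> open U} = (cfun Y :: ('b \<Rightarrow> 'f) set)"
    using topspace_CO[of Y] unfolding compact_open_topology_def by simp
  show "T ` topspace (compact_open_topology X) \<subseteq> \<Union>{{f \<in> cfun Y. f ` K \<subseteq> U} | K U. compactin Y K \<and> open U}"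
    unfolding tX tY using T_in by blast
next
  fix U assume "U \<in> {{g \<in> cfun Y. g ` L \<subseteq> V} | L V. compactin Y L \<and> open (V :: 'f set)}"
  then obtain L V where U: "U = {g \<in> cfun Y. g ` L \<subseteq> V}" and L: "compactin Y L" and V: "open V" by blast
  have eq: "T -` U \<inter> topspace (compact_open_topology X) = {f \<in> cfun X. T f ` L \<subseteq> V}"
    unfolding U topspace_CO using T_in by auto
  obtain K C where K: "compactin X K" and C: "C \<ge> 0"
    and KC: "\<And>f r. f \<in> cfun X \<Longrightarrow> (\<forall>x\<in>K. norm (f x) \<le> r) \<Longrightarrow> (\<forall>y\<in>L. norm (T f y) \<le> C * r)"
    using bound[OF L] by blast
  show "openin (compact_open_topology X) (T -` U \<inter> topspace (compact_open_topology X))"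
    unfolding eq
  proof (subst openin_subopen, intro ballI)
    fix f1 assume f1P: "f1 \<in> {f \<in> cfun X. T f ` L \<subseteq> V}"
    then have f1: "f1 \<in> cfun X" and f1V: "T f1 ` L \<subseteq> V" by auto
    have "continuous_map Y euclidean (T f1)" using T_in[OF f1] by (simp add: cfun_def)
    then have "compact (T f1 ` L)" using image_compactin[OF L] by fastforce
    then obtain \<epsilon> where e: "\<epsilon> > 0" "\<And>z. z \<in> T f1 ` L \<Longrightarrow> \<exists>G\<in>{V}. ball z \<epsilon> \<subseteq> G"
      using Heine_Borel_lemma[of "T f1 ` L" "{V}"] f1V V by auto
    define \<delta> where "\<delta> = \<epsilon> / (2 * (C + 1))"
    have dpos: "\<delta> > 0" unfolding \<delta>_def using e C by simp
    have Cd: "C * \<delta> < \<epsilon>"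
    proof -
      have "C * \<delta> = \<epsilon> * (C / (2 * (C + 1)))" unfolding \<delta>_def by simp
      also have "\<dots> < \<epsilon> * 1" using e C by (intro mult_strict_left_mono) (auto simp: field_simps)
      finally show ?thesis by simp
    qed
    obtain N where N: "openin (compact_open_topology X) N" "f1 \<in> N"
      "\<And>f. f \<in> N \<Longrightarrow> f \<in> cfun X \<and> (\<forall>x\<in>K. norm (f x - f1 x) \<le> \<delta>)"
      using uo_nbhd[OF f1 K dpos] by blast
    have "N \<subseteq> {f \<in> cfun X. T f ` L \<subseteq> V}"
    proof
      fix f assume fN: "f \<in> N"
      then have f: "f \<in> cfun X" and fd: "\<forall>x\<in>K. norm (f x - f1 x) \<le> \<delta>" using N(3) by auto
      have dA: "(\<lambda>x. f x - f1 x) \<in> cfun X" by (rule cfun_diff[OF f f1])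
      have "\<forall>y\<in>L. norm (T (\<lambda>x. f x - f1 x) y) \<le> C * \<delta>" using KC[OF dA] fd by blast
      have "T f y \<in> V" if yL: "y \<in> L" for y
      proof -
        have "norm (T f y - T f1 y) \<le> C * \<delta>"
          using KC[OF dA] fd yL T_diff_pt[OF f f1] by simp
        then have "T f y \<in> ball (T f1 y) \<epsilon>" using Cd by (simp add: dist_norm norm_minus_commute)
        then show ?thesis using e(2)[of "T f1 y"] yL by blast
      qed
      then show "f \<in> {f \<in> cfun X. T f ` L \<subseteq> V}" using f by blast
    qed
    then show "\<exists>W. openin (compact_open_topology X) W \<and> f1 \<in> W \<and> W \<subseteq> {f \<in> cfun X. T f ` L \<subseteq> V}"
      using N by blast
  qed
qed

end

lemma cont_from_singleton:
  assumes "topspace X1 \<subseteq> {a}" "g ` topspace X1 \<subseteq> topspace X2"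
  shows "continuous_map X1 X2 g"
  unfolding continuous_map_def
proof (intro conjI allI impI)
  show "g \<in> topspace X1 \<rightarrow> topspace X2" using assms(2) by blast
  fix U assume "openin X2 U"
  have "{x \<in> topspace X1. g x \<in> U} = {} \<or> {x \<in> topspace X1. g x \<in> U} = topspace X1"
    using assms(1) by blast
  then show "openin X1 {x \<in> topspace X1. g x \<in> U}"
  proof
    assume "{x \<in> topspace X1. g x \<in> U} = {}" then show ?thesis by (simp only: openin_empty)
  next
    assume "{x \<in> topspace X1. g x \<in> U} = topspace X1" then show ?thesis by (simp only: openin_topspace)
  qed
qed

theorem corollary2p7:
  fixes X :: "'a topology" and Y :: "'b topology"
    and T :: "('a \<Rightarrow> 'e::real_normed_vector) \<Rightarrow> ('b \<Rightarrow> 'f::real_normed_vector)"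
  assumes "completely_regular_space X" and "realcompact_space X"
    and "completely_regular_space Y" and "realcompact_space Y"
    and "\<exists>B::'e set. finite B \<and> span B = UNIV"
    and "linear_on_cfun X T"
    and "biseparating X Y T"
  shows "continuous_map (compact_open_topology X) (compact_open_topology Y) T \<and>
         continuous_map (compact_open_topology Y) (compact_open_topology X) (inv_into (cfun X) T)"
proof -
  interpret A: bisep X Y T
    by (unfold_locales) (use assms in auto)
  have c1: "continuous_map (compact_open_topology X) (compact_open_topology Y) T" by (rule A.T_cont)
  have c2: "continuous_map (compact_open_topology Y) (compact_open_topology X) A.S"
  proof (cases "topspace Y = {}")
    case True
    have "cfun Y \<subseteq> {(\<lambda>_. 0) :: 'b \<Rightarrow> 'f}" using True by (auto simp: cfun_def)
    then show ?thesis
      by (intro cont_from_singleton[where a="\<lambda>_. 0"]) (auto simp: topspace_CO A.S_in)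
  next
    case False
    then obtain y0 where y0: "y0 \<in> topspace Y" by blast
    obtain B :: "'e set" where B: "finite B"
      and rep: "\<And>v. (\<Sum>b\<in>B. representation B v b *\<^sub>R b) = v"
      using fd_basis[OF assms(5)] by blast
    have fdF: "\<exists>B'::'f set. finite B' \<and> span B' = UNIV"
    proof (intro exI conjI)
      show "finite (A.Jy y0 ` B)" using B by simp
      show "span (A.Jy y0 ` B) = UNIV"
      proof (rule set_eqI, rule iffI)
        fix w :: 'f
        have c: "constf Y w \<in> cfun Y" by (rule cfun_const)
        have fA: "A.S (constf Y w) \<in> cfun X" by (rule A.S_in[OF c])
        let ?v = "A.S (constf Y w) (A.hmap y0)"
        have "w = T (A.S (constf Y w)) y0" using A.TS[OF c] y0 by (simp add: constf_def)
        also have "\<dots> = A.Jy y0 ?v" by (rule A.T_eval[OF y0 fA])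
        also have "\<dots> = A.Jy y0 (\<Sum>b\<in>B. representation B ?v b *\<^sub>R b)" using rep by simp
        also have "\<dots> = (\<Sum>b\<in>B. representation B ?v b *\<^sub>R A.Jy y0 b)" by (rule A.Jy_sum[OF B])
        finally have "w = (\<Sum>b\<in>B. representation B ?v b *\<^sub>R A.Jy y0 b)" .
        moreover have "(\<Sum>b\<in>B. representation B ?v b *\<^sub>R A.Jy y0 b) \<in> span (A.Jy y0 ` B)"
          by (intro span_sum span_scale span_base) auto
        ultimately show "w \<in> span (A.Jy y0 ` B)" by simp
      qed simp
    qed
    have linS: "linear_on_cfun Y A.S"
      unfolding linear_on_cfun_def
    proof (intro conjI ballI allI)
      fix g1 g2 :: "'b \<Rightarrow> 'f" assume g1: "g1 \<in> cfun Y" and g2: "g2 \<in> cfun Y"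
      have s: "(\<lambda>x. A.S g1 x + A.S g2 x) \<in> cfun X" by (rule cfun_add[OF A.S_in[OF g1] A.S_in[OF g2]])
      have "T (\<lambda>x. A.S g1 x + A.S g2 x) = (\<lambda>y. g1 y + g2 y)"
        using A.T_add[OF A.S_in[OF g1] A.S_in[OF g2]] A.TS[OF g1] A.TS[OF g2] by simp
      then have "A.S (\<lambda>y. g1 y + g2 y) = A.S (T (\<lambda>x. A.S g1 x + A.S g2 x))" by simp
      also have "\<dots> = (\<lambda>x. A.S g1 x + A.S g2 x)" by (rule A.ST[OF s])
      finally show "A.S (\<lambda>y. g1 y + g2 y) = (\<lambda>x. A.S g1 x + A.S g2 x)" .
    next
      fix c :: real and g :: "'b \<Rightarrow> 'f" assume g: "g \<in> cfun Y"
      have s: "(\<lambda>x. c *\<^sub>R A.S g x) \<in> cfun X" by (rule cfun_scale[OF A.S_in[OF g]])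
      have "T (\<lambda>x. c *\<^sub>R A.S g x) = (\<lambda>y. c *\<^sub>R g y)"
        using A.T_scale[OF A.S_in[OF g]] A.TS[OF g] by simp
      then have "A.S (\<lambda>y. c *\<^sub>R g y) = A.S (T (\<lambda>x. c *\<^sub>R A.S g x))" by simp
      also have "\<dots> = (\<lambda>x. c *\<^sub>R A.S g x)" by (rule A.ST[OF s])
      finally show "A.S (\<lambda>y. c *\<^sub>R g y) = (\<lambda>x. c *\<^sub>R A.S g x)" .
    qed
    have bisS: "biseparating Y X A.S"
      unfolding biseparating_def
    proof (intro conjI)
      show "bij_betw A.S (cfun Y) (cfun X)" by (rule bij_betw_inv_into[OF A.bij])
      show "separating Y X A.S" using assms(7) by (simp add: biseparating_def)
      show "separating X Y (inv_into (cfun Y) A.S)"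
      proof (rule separating_cong[of X Y T])
        show "separating X Y T" using assms(7) by (simp add: biseparating_def)
        fix f :: "'a \<Rightarrow> 'e" assume "f \<in> cfun X"
        then show "inv_into (cfun Y) A.S f = T f" by (rule inv_into_inv_into_eq[OF A.bij])
      qed
    qed
    interpret B: bisep Y X A.S
      by (unfold_locales) (use assms fdF linS bisS in auto)
    show ?thesis by (rule B.T_cont)
  qed
  show ?thesis using c1 c2 by simp
qed

end
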